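(* Let $f_1,f_2,f_3$ be differentiable functions of three complex arguments such that, setting $x_{23}=f_1(x,x_2,x_3)$, $x_{31}=f_2(x,x_3,x_1)$, $x_{12}=f_3(x,x_1,x_2)$, one has $$f_1(x_1,x_{12},x_{31})\equiv f_2(x_2,x_{23},x_{12})\equiv f_3(x_3,x_{31},x_{23})$$ identically in $x,x_1,x_2,x_3$, and suppose that this common value $x_{123}=z(x,x_1,x_2,x_3)$ does not depend on $x$. Then, identically in $x,x_1,x_2,x_3$, $$f_{3,x_2}\,f_{2,x_1}\,f_{1,x_3}=-f_{3,x_1}\,f_{2,x_3}\,f_{1,x_2},$$ where $f_{3,x_j}$ denotes the partial derivative of $f_3$ with respect to the argument occupied by $x_j$ in $f_3(x,x_1,x_2)$ (evaluated there), and similarly $f_{2,x_j}$ refers to $f_2(x,x_3,x_1)$ and $f_{1,x_j}$ to $f_1(x,x_2,x_3)$. *)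

theory Defs
  imports "HOL-Analysis.Analysis"
begin

definition cdiff3 :: "(complex \<Rightarrow> complex \<Rightarrow> complex \<Rightarrow> complex) \<Rightarrow> bool" where
  "cdiff3 f \<longleftrightarrow> (\<forall>p q r. \<exists>a b c.
     ((\<lambda>(u, v, w). f u v w) has_derivative (\<lambda>(u, v, w). a * u + b * v + c * w))
       (at (p, q, r)))"

definition pd1 :: "(complex \<Rightarrow> complex \<Rightarrow> complex \<Rightarrow> complex) \<Rightarrow> complex \<Rightarrow> complex \<Rightarrow> complex \<Rightarrow> complex" where
  "pd1 f p q r = deriv (\<lambda>t. f t q r) p"
definition pd2 :: "(complex \<Rightarrow> complex \<Rightarrow> complex \<Rightarrow> complex) \<Rightarrow> complex \<Rightarrow> complex \<Rightarrow> complex \<Rightarrow> complex" where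
  "pd2 f p q r = deriv (\<lambda>t. f p t r) q"
definition pd3 :: "(complex \<Rightarrow> complex \<Rightarrow> complex \<Rightarrow> complex) \<Rightarrow> complex \<Rightarrow> complex \<Rightarrow> complex \<Rightarrow> complex" where
  "pd3 f p q r = deriv (\<lambda>t. f p q t) r"

end

theory Submission
  imports Defs "HOL-Complex_Analysis.Complex_Analysis"
begin

lemma cd_coeffs:
  assumes "cdiff3 f"
  shows "((\<lambda>(u, v, w). f u v w) has_derivative
     (\<lambda>(h1, h2, h3). pd1 f p q r * h1 + pd2 f p q r * h2 + pd3 f p q r * h3)) (at (p, q, r))"
proof -
  obtain a b c where D: "((\<lambda>(u, v, w). f u v w) has_derivative (\<lambda>(u, v, w). a * u + b * v + c * w)) (at (p, q, r))"
    using assms unfolding cdiff3_def by blast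
  have e1: "((\<lambda>t. (t, q, r)) has_derivative (\<lambda>h. (h, 0, 0))) (at t)" for t :: complex
    by (auto intro!: derivative_eq_intros simp: zero_prod_def)
  have e2: "((\<lambda>t. (p, t, r)) has_derivative (\<lambda>h. (0, h, 0))) (at t)" for t :: complex
    by (auto intro!: derivative_eq_intros simp: zero_prod_def)
  have e3: "((\<lambda>t. (p, q, t)) has_derivative (\<lambda>h. (0, 0, h))) (at t)" for t :: complex
    by (auto intro!: derivative_eq_intros simp: zero_prod_def)
  have "((\<lambda>t. f t q r) has_derivative (\<lambda>h. a * h)) (at p)"
    using has_derivative_compose[OF e1[of p] D] by (simp add: o_def)
  hence "((\<lambda>t. f t q r) has_field_derivative a) (at p)"
    by (simp add: has_field_derivative_def mult_commute_abs)
  hence a: "pd1 f p q r = a" unfolding pd1_def by (rule DERIV_imp_deriv)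
  have "((\<lambda>t. f p t r) has_derivative (\<lambda>h. b * h)) (at q)"
    using has_derivative_compose[OF e2[of q] D] by (simp add: o_def)
  hence "((\<lambda>t. f p t r) has_field_derivative b) (at q)"
    by (simp add: has_field_derivative_def mult_commute_abs)
  hence b: "pd2 f p q r = b" unfolding pd2_def by (rule DERIV_imp_deriv)
  have "((\<lambda>t. f p q t) has_derivative (\<lambda>h. c * h)) (at r)"
    using has_derivative_compose[OF e3[of r] D] by (simp add: o_def)
  hence "((\<lambda>t. f p q t) has_field_derivative c) (at r)"
    by (simp add: has_field_derivative_def mult_commute_abs)
  hence c: "pd3 f p q r = c" unfolding pd3_def by (rule DERIV_imp_deriv)
  show ?thesis using D a b c by simp
qed

lemma cd_chain:
  assumes "cdiff3 f"
    and "(\<alpha> has_field_derivative a') (at t within S)"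
    and "(\<beta> has_field_derivative b') (at t within S)"
    and "(\<gamma> has_field_derivative c') (at t within S)"
  shows "((\<lambda>t. f (\<alpha> t) (\<beta> t) (\<gamma> t)) has_field_derivative
     (pd1 f (\<alpha> t) (\<beta> t) (\<gamma> t) * a' + pd2 f (\<alpha> t) (\<beta> t) (\<gamma> t) * b' + pd3 f (\<alpha> t) (\<beta> t) (\<gamma> t) * c')) (at t within S)"
proof -
  have P: "((\<lambda>t. (\<alpha> t, \<beta> t, \<gamma> t)) has_derivative (\<lambda>h. (a' * h, b' * h, c' * h))) (at t within S)"
    using assms(2-4) unfolding has_field_derivative_def
    by (auto intro!: has_derivative_Pair)
  have D: "((\<lambda>(u, v, w). f u v w) has_derivative
     (\<lambda>(h1, h2, h3). pd1 f (\<alpha> t) (\<beta> t) (\<gamma> t) * h1 + pd2 f (\<alpha> t) (\<beta> t) (\<gamma> t) * h2 + pd3 f (\<alpha> t) (\<beta> t) (\<gamma> t) * h3)) (at (\<alpha> t, \<beta> t, \<gamma> t) within (\<lambda>t. (\<alpha> t, \<beta> t, \<gamma> t)) ` S)"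
    using cd_coeffs[OF assms(1)] has_derivative_at_withinI by blast
  have "((\<lambda>t. f (\<alpha> t) (\<beta> t) (\<gamma> t)) has_derivative (\<lambda>h. pd1 f (\<alpha> t) (\<beta> t) (\<gamma> t) * (a' * h) + pd2 f (\<alpha> t) (\<beta> t) (\<gamma> t) * (b' * h) + pd3 f (\<alpha> t) (\<beta> t) (\<gamma> t) * (c' * h))) (at t within S)"
    using has_derivative_in_compose[OF P D] by (simp add: o_def)
  then show ?thesis unfolding has_field_derivative_def
    by (rule has_derivative_eq_rhs) (auto simp: fun_eq_iff algebra_simps)
qed

lemma deriv_cont_param:
  fixes g :: "'a::heine_borel \<Rightarrow> complex \<Rightarrow> complex"
  assumes cont: "continuous_on UNIV (\<lambda>x. g (fst x) (snd x))"
    and hol: "\<And>a. g a holomorphic_on UNIV"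
  shows "continuous_on UNIV (\<lambda>x. deriv (g (fst x)) (snd x))"
  unfolding continuous_on_iff
proof (intro ballI allI impI)
  fix x :: "'a \<times> complex" and \<epsilon> :: real
  assume "\<epsilon> > 0"
  obtain a0 t0 where x: "x = (a0, t0)" by (cases x)
  define K where "K = cball a0 1 \<times> cball t0 1 \<times> sphere t0 (2::real)"
  define \<Phi> where "\<Phi> = (\<lambda>y::'a \<times> complex \<times> complex. g (fst y) (snd (snd y)) / (snd (snd y) - fst (snd y))^2)"
  have cK: "compact K" unfolding K_def by (intro compact_Times compact_cball compact_sphere)
  have nz: "snd (snd y) - fst (snd y) \<noteq> 0" if "y \<in> K" for y
  proof -
    from that have "dist t0 (snd (snd y)) = 2" "dist t0 (fst (snd y)) \<le> 1" unfolding K_def by auto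
    then show ?thesis by (auto simp: dist_commute)
  qed
  have cg: "continuous_on K (\<lambda>y. g (fst y) (snd (snd y)))"
  proof -
    have "continuous_on K (\<lambda>y. (fst y, snd (snd y)))" by (intro continuous_intros)
    then show ?thesis using continuous_on_compose2[OF cont, of K "\<lambda>y. (fst y, snd (snd y))"] by auto
  qed
  have cPhi: "continuous_on K \<Phi>" unfolding \<Phi>_def
    using nz by (intro continuous_intros cg) auto
  then have "uniformly_continuous_on K \<Phi>" using cK compact_uniformly_continuous by blast
  then obtain d0 where d0: "d0 > 0" and
    ud: "\<And>y y'. y \<in> K \<Longrightarrow> y' \<in> K \<Longrightarrow> dist y' y < d0 \<Longrightarrow> dist (\<Phi> y') (\<Phi> y) < \<epsilon>/4"
    unfolding uniformly_continuous_on_def using \<open>\<epsilon> > 0\<close>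
    by (metis divide_pos_pos zero_less_numeral)
  define I where "I = (\<lambda>a t. contour_integral (circlepath t0 2) (\<lambda>u. g a u / (u - t)^2))"
  have rep: "deriv (g a) t = 1 / (2 * of_real pi * \<i>) * I a t"
    and integ: "(\<lambda>u. g a u / (u - t)^2) contour_integrable_on (circlepath t0 2)"
    if "dist t t0 < 2" for a t
  proof -
    have c1: "continuous_on (cball t0 2) (g a)"
      using hol holomorphic_on_imp_continuous_on continuous_on_subset by blast
    have h1: "g a holomorphic_on ball t0 2" using hol holomorphic_on_subset by blast
    have w: "t \<in> ball t0 2" using that by (simp add: dist_commute)
    show "deriv (g a) t = 1 / (2 * of_real pi * \<i>) * I a t"
      unfolding I_def by (rule DERIV_imp_deriv[OF Cauchy_derivative_integral_circlepath(2)[OF c1 h1 w]])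
    show "(\<lambda>u. g a u / (u - t)^2) contour_integrable_on (circlepath t0 2)"
      by (rule Cauchy_derivative_integral_circlepath(1)[OF c1 h1 w])
  qed
  show "\<exists>\<delta>>0. \<forall>x'\<in>UNIV. dist x' x < \<delta> \<longrightarrow>
          dist (deriv (g (fst x')) (snd x')) (deriv (g (fst x)) (snd x)) < \<epsilon>"
  proof (intro exI[of _ "min 1 d0"] conjI ballI impI)
    show "min 1 d0 > 0" using d0 by simp
    fix y assume "y \<in> (UNIV :: ('a \<times> complex) set)" and dy: "dist y x < min 1 d0"
    obtain a t where y: "y = (a, t)" by (cases y)
    have da: "dist a a0 < 1" and dt: "dist t t0 < 1" and dd: "dist (a, t) (a0, t0) < d0"
      using dy x y dist_fst_le[of y x] dist_snd_le[of y x] by auto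
    have bound: "norm (g a u / (u - t)^2 - g a0 u / (u - t0)^2) \<le> \<epsilon>/4"
      if "norm (u - t0) = 2" for u
    proof -
      have in1: "(a, t, u) \<in> K" and in2: "(a0, t0, u) \<in> K"
        using da dt that unfolding K_def by (auto simp: dist_commute dist_norm norm_minus_commute)
      have "dist (a, t, u) (a0, t0, u) = dist (a, t) (a0, t0)"
        by (simp add: dist_Pair_Pair)
      with dd have "dist (a, t, u) (a0, t0, u) < d0" by simp
      from ud[OF in2 in1 this] show ?thesis
        by (simp add: \<Phi>_def dist_norm)
    qed
    have hc: "((\<lambda>u. g a u / (u - t)^2 - g a0 u / (u - t0)^2) has_contour_integral (I a t - I a0 t0)) (circlepath t0 2)"
      unfolding I_def
      by (intro has_contour_integral_diff has_contour_integral_integral integ) (use dt in auto)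
    have "norm (I a t - I a0 t0) \<le> \<epsilon>/4 * (2 * pi * 2)"
      by (rule has_contour_integral_bound_circlepath[OF hc]) (use \<open>\<epsilon> > 0\<close> bound in auto)
    moreover have E: "deriv (g a) t - deriv (g a0) t0 = (I a t - I a0 t0) / (2 * of_real pi * \<i>)"
      using rep[of t a] rep[of t0 a0] dt by (simp add: diff_divide_distrib)
    have n2: "norm (2 * of_real pi * \<i>) = 2 * pi" by (simp add: norm_mult)
    ultimately have "norm (deriv (g a) t - deriv (g a0) t0) \<le> \<epsilon>/4 * (2 * pi * 2) / (2 * pi)"
      unfolding E norm_divide n2 by (intro divide_right_mono) auto
    also have "\<dots> < \<epsilon>" using \<open>\<epsilon> > 0\<close> by simp
    finally show "dist (deriv (g (fst y)) (snd y)) (deriv (g (fst x)) (snd x)) < \<epsilon>"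
      by (simp add: x y dist_norm)
  qed
qed

lemma cd_cont:
  assumes "cdiff3 f"
  shows "continuous_on UNIV (\<lambda>y. f (fst y) (fst (snd y)) (snd (snd y)))"
proof -
  have eq: "(\<lambda>(u, v, w). f u v w) = (\<lambda>y. f (fst y) (fst (snd y)) (snd (snd y)))"
    by (simp add: fun_eq_iff split_beta)
  have "continuous (at y) (\<lambda>y. f (fst y) (fst (snd y)) (snd (snd y)))" for y
  proof -
    obtain p q r where y: "y = (p, q, r)" by (cases y) auto
    show ?thesis using has_derivative_continuous[OF cd_coeffs[OF assms, of p q r]] unfolding eq y .
  qed
  then show ?thesis by (simp add: continuous_at_imp_continuous_on)
qed

lemma hd1: assumes "cdiff3 f" shows "((\<lambda>t. f t v w) has_field_derivative pd1 f t v w) (at t)"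
  using cd_chain[of f "\<lambda>t. t" 1 t UNIV "\<lambda>_. v" 0 "\<lambda>_. w" 0] assms by (simp add: DERIV_ident DERIV_const)
lemma hd2: assumes "cdiff3 f" shows "((\<lambda>t. f u t w) has_field_derivative pd2 f u t w) (at t)"
  using cd_chain[of f "\<lambda>_. u" 0 t UNIV "\<lambda>t. t" 1 "\<lambda>_. w" 0] assms by (simp add: DERIV_ident DERIV_const)
lemma hd3: assumes "cdiff3 f" shows "((\<lambda>t. f u v t) has_field_derivative pd3 f u v t) (at t)"
  using cd_chain[of f "\<lambda>_. u" 0 t UNIV "\<lambda>_. v" 0 "\<lambda>t. t" 1] assms by (simp add: DERIV_ident DERIV_const)

lemma hol1: "cdiff3 f \<Longrightarrow> (\<lambda>t. f t v w) holomorphic_on S"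
  unfolding holomorphic_on_def field_differentiable_def using hd1 has_field_derivative_at_within by blast
lemma hol2: "cdiff3 f \<Longrightarrow> (\<lambda>t. f u t w) holomorphic_on S"
  unfolding holomorphic_on_def field_differentiable_def using hd2 has_field_derivative_at_within by blast
lemma hol3: "cdiff3 f \<Longrightarrow> (\<lambda>t. f u v t) holomorphic_on S"
  unfolding holomorphic_on_def field_differentiable_def using hd3 has_field_derivative_at_within by blast

lemma pd3_cont_raw:
  assumes "cdiff3 f"
  shows "continuous_on UNIV (\<lambda>y. pd3 f (fst y) (fst (snd y)) (snd (snd y)))"
proof -
  define g where "g = (\<lambda>(a::complex \<times> complex) t. f (fst a) (snd a) t)"
  have c0: "continuous_on UNIV (\<lambda>y. f (fst y) (fst (snd y)) (snd (snd y)))" by (rule cd_cont[OF assms])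
  have "continuous_on UNIV (\<lambda>x. g (fst x) (snd x))"
  proof -
    have "continuous_on UNIV (\<lambda>x::(complex\<times>complex)\<times>complex. (fst (fst x), snd (fst x), snd x))" (is "continuous_on _ ?cm")
      by (intro continuous_intros)
    then have "continuous_on UNIV ((\<lambda>y. f (fst y) (fst (snd y)) (snd (snd y))) \<circ> ?cm)"
      by (rule continuous_on_compose) (use c0 continuous_on_subset in blast)
    then show ?thesis by (rule continuous_on_eq) (simp add: g_def)
  qed
  moreover have "\<And>a. g a holomorphic_on UNIV" unfolding g_def using hol3[OF assms] by auto
  ultimately have c: "continuous_on UNIV (\<lambda>x. deriv (g (fst x)) (snd x))" by (rule deriv_cont_param)
  have h: "continuous_on UNIV (\<lambda>y::complex\<times>complex\<times>complex. ((fst y, fst (snd y)), snd (snd y)))"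
    by (intro continuous_intros)
  have cc: "continuous_on UNIV ((\<lambda>x. deriv (g (fst x)) (snd x)) \<circ> (\<lambda>y::complex\<times>complex\<times>complex. ((fst y, fst (snd y)), snd (snd y))))"
    by (rule continuous_on_compose[OF h]) (use c continuous_on_subset in blast)
  have eq: "(\<lambda>x. deriv (g (fst x)) (snd x)) \<circ> (\<lambda>y::complex\<times>complex\<times>complex. ((fst y, fst (snd y)), snd (snd y))) = (\<lambda>y. pd3 f (fst y) (fst (snd y)) (snd (snd y)))"
    by (simp add: fun_eq_iff g_def pd3_def)
  show ?thesis by (rule continuous_on_eq[OF cc]) (simp add: g_def pd3_def)
qed

lemma pd2_cont_raw:
  assumes "cdiff3 f"
  shows "continuous_on UNIV (\<lambda>y. pd2 f (fst y) (fst (snd y)) (snd (snd y)))"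
proof -
  define g where "g = (\<lambda>(a::complex \<times> complex) t. f (fst a) t (snd a))"
  have c0: "continuous_on UNIV (\<lambda>y. f (fst y) (fst (snd y)) (snd (snd y)))" by (rule cd_cont[OF assms])
  have "continuous_on UNIV (\<lambda>x. g (fst x) (snd x))"
  proof -
    have "continuous_on UNIV (\<lambda>x::(complex\<times>complex)\<times>complex. (fst (fst x), snd x, snd (fst x)))" (is "continuous_on _ ?cm")
      by (intro continuous_intros)
    then have "continuous_on UNIV ((\<lambda>y. f (fst y) (fst (snd y)) (snd (snd y))) \<circ> ?cm)"
      by (rule continuous_on_compose) (use c0 continuous_on_subset in blast)
    then show ?thesis by (rule continuous_on_eq) (simp add: g_def)
  qed
  moreover have "\<And>a. g a holomorphic_on UNIV" unfolding g_def using hol2[OF assms] by auto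
  ultimately have c: "continuous_on UNIV (\<lambda>x. deriv (g (fst x)) (snd x))" by (rule deriv_cont_param)
  have h: "continuous_on UNIV (\<lambda>y::complex\<times>complex\<times>complex. ((fst y, snd (snd y)), fst (snd y)))"
    by (intro continuous_intros)
  have cc: "continuous_on UNIV ((\<lambda>x. deriv (g (fst x)) (snd x)) \<circ> (\<lambda>y::complex\<times>complex\<times>complex. ((fst y, snd (snd y)), fst (snd y))))"
    by (rule continuous_on_compose[OF h]) (use c continuous_on_subset in blast)
  have eq: "(\<lambda>x. deriv (g (fst x)) (snd x)) \<circ> (\<lambda>y::complex\<times>complex\<times>complex. ((fst y, snd (snd y)), fst (snd y))) = (\<lambda>y. pd2 f (fst y) (fst (snd y)) (snd (snd y)))"
    by (simp add: fun_eq_iff g_def pd2_def)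
  show ?thesis by (rule continuous_on_eq[OF cc]) (simp add: g_def pd2_def)
qed

lemma pd1_cont_raw:
  assumes "cdiff3 f"
  shows "continuous_on UNIV (\<lambda>y. pd1 f (fst y) (fst (snd y)) (snd (snd y)))"
proof -
  define g where "g = (\<lambda>(a::complex \<times> complex) t. f t (fst a) (snd a))"
  have c0: "continuous_on UNIV (\<lambda>y. f (fst y) (fst (snd y)) (snd (snd y)))" by (rule cd_cont[OF assms])
  have "continuous_on UNIV (\<lambda>x. g (fst x) (snd x))"
  proof -
    have "continuous_on UNIV (\<lambda>x::(complex\<times>complex)\<times>complex. (snd x, fst (fst x), snd (fst x)))" (is "continuous_on _ ?cm")
      by (intro continuous_intros)
    then have "continuous_on UNIV ((\<lambda>y. f (fst y) (fst (snd y)) (snd (snd y))) \<circ> ?cm)"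
      by (rule continuous_on_compose) (use c0 continuous_on_subset in blast)
    then show ?thesis by (rule continuous_on_eq) (simp add: g_def)
  qed
  moreover have "\<And>a. g a holomorphic_on UNIV" unfolding g_def using hol1[OF assms] by auto
  ultimately have c: "continuous_on UNIV (\<lambda>x. deriv (g (fst x)) (snd x))" by (rule deriv_cont_param)
  have h: "continuous_on UNIV (\<lambda>y::complex\<times>complex\<times>complex. ((fst (snd y), snd (snd y)), fst y))"
    by (intro continuous_intros)
  have cc: "continuous_on UNIV ((\<lambda>x. deriv (g (fst x)) (snd x)) \<circ> (\<lambda>y::complex\<times>complex\<times>complex. ((fst (snd y), snd (snd y)), fst y)))"
    by (rule continuous_on_compose[OF h]) (use c continuous_on_subset in blast)
  have eq: "(\<lambda>x. deriv (g (fst x)) (snd x)) \<circ> (\<lambda>y::complex\<times>complex\<times>complex. ((fst (snd y), snd (snd y)), fst y)) = (\<lambda>y. pd1 f (fst y) (fst (snd y)) (snd (snd y)))"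
    by (simp add: fun_eq_iff g_def pd1_def)
  show ?thesis by (rule continuous_on_eq[OF cc]) (simp add: g_def pd1_def)
qed

lemma comp3_cont:
  assumes c: "continuous_on UNIV (\<lambda>y. F (fst y) (fst (snd y)) (snd (snd y)))"
    and "continuous_on S \<alpha>" "continuous_on S \<beta>" "continuous_on S \<gamma>"
  shows "continuous_on S (\<lambda>s. F (\<alpha> s) (\<beta> s) (\<gamma> s))"
proof -
  have "continuous_on S (\<lambda>s. (\<alpha> s, \<beta> s, \<gamma> s))" using assms(2-4) by (intro continuous_intros)
  from continuous_on_compose2[OF c this] show ?thesis by simp
qed

lemmas pd1_cont = comp3_cont[OF pd1_cont_raw]
lemmas pd2_cont = comp3_cont[OF pd2_cont_raw]
lemmas pd3_cont = comp3_cont[OF pd3_cont_raw]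
lemmas f_cont = comp3_cont[OF cd_cont]

lemma ent_eq_open:
  fixes g :: "complex \<Rightarrow> complex"
  assumes "g holomorphic_on UNIV" "open S" "S \<noteq> {}" "\<And>t. t \<in> S \<Longrightarrow> g t = c"
  shows "g t = c"
  using analytic_continuation_open[of S UNIV g "\<lambda>_. c" t] assms by auto

lemma ent_deriv0_open:
  fixes g :: "complex \<Rightarrow> complex"
  assumes "g holomorphic_on UNIV" "open S" "S \<noteq> {}" "\<And>t. t \<in> S \<Longrightarrow> deriv g t = 0"
  shows "g t = g t'"
proof -
  have "deriv g holomorphic_on UNIV" using assms(1) by (intro holomorphic_deriv) auto
  then have d0: "deriv g t = 0" for t using ent_eq_open[of "deriv g" S 0 t] assms by auto
  have "(g has_field_derivative 0) (at t)" for t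
    using d0[of t] assms(1) by (metis DERIV_deriv_iff_field_differentiable UNIV_I holomorphic_on_imp_differentiable_at open_UNIV)
  then obtain c where "\<And>x. g x = c"
    using has_field_derivative_zero_constant[of UNIV g] by (auto intro: has_field_derivative_at_within)
  then show ?thesis by simp
qed

lemma ent_open_img:
  fixes g :: "complex \<Rightarrow> complex"
  assumes "g holomorphic_on UNIV" "deriv g t0 \<noteq> 0" "open U"
  shows "open (g ` U)"
proof (rule open_mapping_thm[OF assms(1) open_UNIV connected_UNIV assms(3)])
  show "U \<subseteq> UNIV" by simp
  show "\<not> g constant_on UNIV"
  proof
    assume "g constant_on UNIV"
    then obtain c where "\<And>x. g x = c" unfolding constant_on_def by auto
    then have "g = (\<lambda>_. c)" by auto
    then have "deriv g t0 = 0" by simp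
    with assms(2) show False by simp
  qed
qed

type_synonym fn3 = "complex \<Rightarrow> complex \<Rightarrow> complex \<Rightarrow> complex"
type_synonym pt = "complex \<times> complex \<times> complex \<times> complex"

definition good :: "fn3 \<Rightarrow> fn3 \<Rightarrow> fn3 \<Rightarrow> bool" where
  "good f1 f2 f3 \<longleftrightarrow> cdiff3 f1 \<and> cdiff3 f2 \<and> cdiff3 f3 \<and>
    (\<forall>x x1 x2 x3. f1 x1 (f3 x x1 x2) (f2 x x3 x1) = f2 x2 (f1 x x2 x3) (f3 x x1 x2) \<and>
      f2 x2 (f1 x x2 x3) (f3 x x1 x2) = f3 x3 (f2 x x3 x1) (f1 x x2 x3)) \<and>
    (\<forall>x x' x1 x2 x3. f1 x1 (f3 x x1 x2) (f2 x x3 x1) = f1 x1 (f3 x' x1 x2) (f2 x' x3 x1))"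

lemma deriv_eq_fun:
  assumes "(F has_field_derivative a) (at t)" "(G has_field_derivative b) (at t)" "\<And>t. F t = G t"
  shows "a = b"
proof -
  have "F = G" using assms(3) by auto
  then show ?thesis using assms(1,2) DERIV_unique by metis
qed

lemma eqs:
  fixes ya yb yc yd :: complex
  assumes "good f1 f2 f3"
  defines "X12 \<equiv> f3 ya yb yc" and "X31 \<equiv> f2 ya yd yb" and "X23 \<equiv> f1 ya yc yd"
  shows
  "pd2 f1 yb X12 X31 * pd1 f3 ya yb yc + pd3 f1 yb X12 X31 * pd1 f2 ya yd yb = 0"
  "pd2 f2 yc X23 X12 * pd1 f1 ya yc yd + pd3 f2 yc X23 X12 * pd1 f3 ya yb yc = 0"
  "pd2 f3 yd X31 X23 * pd1 f2 ya yd yb + pd3 f3 yd X31 X23 * pd1 f1 ya yc yd = 0"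
  "pd1 f1 yb X12 X31 + pd2 f1 yb X12 X31 * pd2 f3 ya yb yc + pd3 f1 yb X12 X31 * pd3 f2 ya yd yb
     = pd3 f2 yc X23 X12 * pd2 f3 ya yb yc"
  "pd3 f2 yc X23 X12 * pd2 f3 ya yb yc = pd2 f3 yd X31 X23 * pd3 f2 ya yd yb"
  "pd2 f1 yb X12 X31 * pd3 f3 ya yb yc =
     pd1 f2 yc X23 X12 + pd2 f2 yc X23 X12 * pd2 f1 ya yc yd + pd3 f2 yc X23 X12 * pd3 f3 ya yb yc"
  "pd1 f2 yc X23 X12 + pd2 f2 yc X23 X12 * pd2 f1 ya yc yd + pd3 f2 yc X23 X12 * pd3 f3 ya yb yc
     = pd3 f3 yd X31 X23 * pd2 f1 ya yc yd"
  "pd3 f1 yb X12 X31 * pd2 f2 ya yd yb = pd2 f2 yc X23 X12 * pd3 f1 ya yc yd"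
  "pd2 f2 yc X23 X12 * pd3 f1 ya yc yd =
     pd1 f3 yd X31 X23 + pd2 f3 yd X31 X23 * pd2 f2 ya yd yb + pd3 f3 yd X31 X23 * pd3 f1 ya yc yd"
proof -
  have c1: "cdiff3 f1" and c2: "cdiff3 f2" and c3: "cdiff3 f3"
    and con: "\<And>ya yb yc yd. f1 yb (f3 ya yb yc) (f2 ya yd yb) = f2 yc (f1 ya yc yd) (f3 ya yb yc)"
    "\<And>ya yb yc yd. f2 yc (f1 ya yc yd) (f3 ya yb yc) = f3 yd (f2 ya yd yb) (f1 ya yc yd)"
    and ind: "\<And>ya ya' yb yc yd. f1 yb (f3 ya yb yc) (f2 ya yd yb) = f1 yb (f3 ya' yb yc) (f2 ya' yd yb)"
    using assms(1) unfolding good_def by blast+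
  note I = DERIV_ident
  note K = DERIV_const
  have dx1: "((\<lambda>t. f1 yb (f3 t yb yc) (f2 t yd yb)) has_field_derivative
      pd1 f1 yb X12 X31 * 0 + pd2 f1 yb X12 X31 * pd1 f3 ya yb yc + pd3 f1 yb X12 X31 * pd1 f2 ya yd yb) (at ya)"
    unfolding X12_def X31_def by (rule cd_chain[OF c1 K hd1[OF c3] hd1[OF c2]])
  have dx2: "((\<lambda>t. f2 yc (f1 t yc yd) (f3 t yb yc)) has_field_derivative
      pd1 f2 yc X23 X12 * 0 + pd2 f2 yc X23 X12 * pd1 f1 ya yc yd + pd3 f2 yc X23 X12 * pd1 f3 ya yb yc) (at ya)"
    unfolding X12_def X23_def by (rule cd_chain[OF c2 K hd1[OF c1] hd1[OF c3]])
  have dx3: "((\<lambda>t. f3 yd (f2 t yd yb) (f1 t yc yd)) has_field_derivative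
      pd1 f3 yd X31 X23 * 0 + pd2 f3 yd X31 X23 * pd1 f2 ya yd yb + pd3 f3 yd X31 X23 * pd1 f1 ya yc yd) (at ya)"
    unfolding X31_def X23_def by (rule cd_chain[OF c3 K hd1[OF c2] hd1[OF c1]])
  have const1: "f1 yb (f3 t yb yc) (f2 t yd yb) = f1 yb X12 X31" for t
    unfolding X12_def X31_def by (rule ind)
  have const2: "f2 yc (f1 t yc yd) (f3 t yb yc) = f1 yb X12 X31" for t
    unfolding X12_def X31_def using ind con by metis
  have const3: "f3 yd (f2 t yd yb) (f1 t yc yd) = f1 yb X12 X31" for t
    unfolding X12_def X31_def using ind con by metis
  show "pd2 f1 yb X12 X31 * pd1 f3 ya yb yc + pd3 f1 yb X12 X31 * pd1 f2 ya yd yb = 0"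
    using deriv_eq_fun[OF dx1 K const1] by simp
  show "pd2 f2 yc X23 X12 * pd1 f1 ya yc yd + pd3 f2 yc X23 X12 * pd1 f3 ya yb yc = 0"
    using deriv_eq_fun[OF dx2 K const2] by simp
  show "pd2 f3 yd X31 X23 * pd1 f2 ya yd yb + pd3 f3 yd X31 X23 * pd1 f1 ya yc yd = 0"
    using deriv_eq_fun[OF dx3 K const3] by simp
  have d11: "((\<lambda>t. f1 t (f3 ya t yc) (f2 ya yd t)) has_field_derivative
      pd1 f1 yb X12 X31 * 1 + pd2 f1 yb X12 X31 * pd2 f3 ya yb yc + pd3 f1 yb X12 X31 * pd3 f2 ya yd yb) (at yb)"
    unfolding X12_def X31_def by (rule cd_chain[OF c1 I hd2[OF c3] hd3[OF c2]])
  have d12: "((\<lambda>t. f2 yc (f1 ya yc yd) (f3 ya t yc)) has_field_derivative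
      pd1 f2 yc X23 X12 * 0 + pd2 f2 yc X23 X12 * 0 + pd3 f2 yc X23 X12 * pd2 f3 ya yb yc) (at yb)"
    unfolding X12_def X23_def by (rule cd_chain[OF c2 K K hd2[OF c3]])
  have d13: "((\<lambda>t. f3 yd (f2 ya yd t) (f1 ya yc yd)) has_field_derivative
      pd1 f3 yd X31 X23 * 0 + pd2 f3 yd X31 X23 * pd3 f2 ya yd yb + pd3 f3 yd X31 X23 * 0) (at yb)"
    unfolding X31_def X23_def by (rule cd_chain[OF c3 K hd3[OF c2] K])
  show "pd1 f1 yb X12 X31 + pd2 f1 yb X12 X31 * pd2 f3 ya yb yc + pd3 f1 yb X12 X31 * pd3 f2 ya yd yb
     = pd3 f2 yc X23 X12 * pd2 f3 ya yb yc"
    using deriv_eq_fun[OF d11 d12] con by simp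
  show "pd3 f2 yc X23 X12 * pd2 f3 ya yb yc = pd2 f3 yd X31 X23 * pd3 f2 ya yd yb"
    using deriv_eq_fun[OF d12 d13] con by simp
  have d21: "((\<lambda>t. f1 yb (f3 ya yb t) (f2 ya yd yb)) has_field_derivative
      pd1 f1 yb X12 X31 * 0 + pd2 f1 yb X12 X31 * pd3 f3 ya yb yc + pd3 f1 yb X12 X31 * 0) (at yc)"
    unfolding X12_def X31_def by (rule cd_chain[OF c1 K hd3[OF c3] K])
  have d22: "((\<lambda>t. f2 t (f1 ya t yd) (f3 ya yb t)) has_field_derivative
      pd1 f2 yc X23 X12 * 1 + pd2 f2 yc X23 X12 * pd2 f1 ya yc yd + pd3 f2 yc X23 X12 * pd3 f3 ya yb yc) (at yc)"
    unfolding X12_def X23_def by (rule cd_chain[OF c2 I hd2[OF c1] hd3[OF c3]])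
  have d23: "((\<lambda>t. f3 yd (f2 ya yd yb) (f1 ya t yd)) has_field_derivative
      pd1 f3 yd X31 X23 * 0 + pd2 f3 yd X31 X23 * 0 + pd3 f3 yd X31 X23 * pd2 f1 ya yc yd) (at yc)"
    unfolding X31_def X23_def by (rule cd_chain[OF c3 K K hd2[OF c1]])
  show "pd2 f1 yb X12 X31 * pd3 f3 ya yb yc =
     pd1 f2 yc X23 X12 + pd2 f2 yc X23 X12 * pd2 f1 ya yc yd + pd3 f2 yc X23 X12 * pd3 f3 ya yb yc"
    using deriv_eq_fun[OF d21 d22] con by simp
  show "pd1 f2 yc X23 X12 + pd2 f2 yc X23 X12 * pd2 f1 ya yc yd + pd3 f2 yc X23 X12 * pd3 f3 ya yb yc
     = pd3 f3 yd X31 X23 * pd2 f1 ya yc yd"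
    using deriv_eq_fun[OF d22 d23] con by simp
  have d31: "((\<lambda>t. f1 yb (f3 ya yb yc) (f2 ya t yb)) has_field_derivative
      pd1 f1 yb X12 X31 * 0 + pd2 f1 yb X12 X31 * 0 + pd3 f1 yb X12 X31 * pd2 f2 ya yd yb) (at yd)"
    unfolding X12_def X31_def by (rule cd_chain[OF c1 K K hd2[OF c2]])
  have d32: "((\<lambda>t. f2 yc (f1 ya yc t) (f3 ya yb yc)) has_field_derivative
      pd1 f2 yc X23 X12 * 0 + pd2 f2 yc X23 X12 * pd3 f1 ya yc yd + pd3 f2 yc X23 X12 * 0) (at yd)"
    unfolding X12_def X23_def by (rule cd_chain[OF c2 K hd3[OF c1] K])
  have d33: "((\<lambda>t. f3 t (f2 ya t yb) (f1 ya yc t)) has_field_derivative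
      pd1 f3 yd X31 X23 * 1 + pd2 f3 yd X31 X23 * pd2 f2 ya yd yb + pd3 f3 yd X31 X23 * pd3 f1 ya yc yd) (at yd)"
    unfolding X31_def X23_def by (rule cd_chain[OF c3 I hd2[OF c2] hd3[OF c1]])
  show "pd3 f1 yb X12 X31 * pd2 f2 ya yd yb = pd2 f2 yc X23 X12 * pd3 f1 ya yc yd"
    using deriv_eq_fun[OF d31 d32] con by simp
  show "pd2 f2 yc X23 X12 * pd3 f1 ya yc yd =
     pd1 f3 yd X31 X23 + pd2 f3 yd X31 X23 * pd2 f2 ya yd yb + pd3 f3 yd X31 X23 * pd3 f1 ya yc yd"
    using deriv_eq_fun[OF d32 d33] con by simp
qed

definition "pp f1 f2 f3 (s::pt) = pd1 f3 (fst s) (fst (snd s)) (fst (snd (snd s)))"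
definition "qq f1 f2 f3 (s::pt) = pd1 f2 (fst s) (snd (snd (snd s))) (fst (snd s))"
definition "rr f1 f2 f3 (s::pt) = pd1 f1 (fst s) (fst (snd (snd s))) (snd (snd (snd s)))"
definition "PP1 f1 f2 f3 (s::pt) = pd2 f1 (fst s) (fst (snd (snd s))) (snd (snd (snd s)))"
definition "PP2 f1 f2 f3 (s::pt) = pd2 f2 (fst s) (snd (snd (snd s))) (fst (snd s))"
definition "PP3 f1 f2 f3 (s::pt) = pd2 f3 (fst s) (fst (snd s)) (fst (snd (snd s)))"
definition "QQ1 f1 f2 f3 (s::pt) = pd3 f1 (fst s) (fst (snd (snd s))) (snd (snd (snd s)))"
definition "QQ2 f1 f2 f3 (s::pt) = pd3 f2 (fst s) (snd (snd (snd s))) (fst (snd s))"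
definition "QQ3 f1 f2 f3 (s::pt) = pd3 f3 (fst s) (fst (snd s)) (fst (snd (snd s)))"
definition "QP f1 f2 f3 (s::pt) = QQ3 f1 f2 f3 s * QQ2 f1 f2 f3 s * QQ1 f1 f2 f3 s"
definition "TT f1 f2 f3 (s::pt) = QQ3 f1 f2 f3 s * QQ2 f1 f2 f3 s * QQ1 f1 f2 f3 s
   + PP3 f1 f2 f3 s * PP2 f1 f2 f3 s * PP1 f1 f2 f3 s"

lemmas pt_defs = pp_def qq_def rr_def PP1_def PP2_def PP3_def QQ1_def QQ2_def QQ3_def QP_def TT_def

lemma good_cd: assumes "good f1 f2 f3" shows "cdiff3 f1" "cdiff3 f2" "cdiff3 f3"
  using assms unfolding good_def by auto

lemma pt_cont:
  assumes "good f1 f2 f3"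
  shows "continuous_on UNIV (pp f1 f2 f3)" "continuous_on UNIV (qq f1 f2 f3)" "continuous_on UNIV (rr f1 f2 f3)"
    "continuous_on UNIV (PP1 f1 f2 f3)" "continuous_on UNIV (PP2 f1 f2 f3)" "continuous_on UNIV (PP3 f1 f2 f3)"
    "continuous_on UNIV (QQ1 f1 f2 f3)" "continuous_on UNIV (QQ2 f1 f2 f3)" "continuous_on UNIV (QQ3 f1 f2 f3)"
    "continuous_on UNIV (QP f1 f2 f3)" "continuous_on UNIV (TT f1 f2 f3)"
proof -
  note c = good_cd[OF assms]
  have f: "continuous_on UNIV (\<lambda>s::pt. fst s)" "continuous_on UNIV (\<lambda>s::pt. fst (snd s))"
    "continuous_on UNIV (\<lambda>s::pt. fst (snd (snd s)))" "continuous_on UNIV (\<lambda>s::pt. snd (snd (snd s)))"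
    by (intro continuous_intros)+
  show 1: "continuous_on UNIV (pp f1 f2 f3)" unfolding pp_def[abs_def] by (rule pd1_cont) (rule c f)+
  show 2: "continuous_on UNIV (qq f1 f2 f3)" unfolding qq_def[abs_def] by (rule pd1_cont) (rule c f)+
  show 3: "continuous_on UNIV (rr f1 f2 f3)" unfolding rr_def[abs_def] by (rule pd1_cont) (rule c f)+
  show 4: "continuous_on UNIV (PP1 f1 f2 f3)" unfolding PP1_def[abs_def] by (rule pd2_cont) (rule c f)+
  show 5: "continuous_on UNIV (PP2 f1 f2 f3)" unfolding PP2_def[abs_def] by (rule pd2_cont) (rule c f)+
  show 6: "continuous_on UNIV (PP3 f1 f2 f3)" unfolding PP3_def[abs_def] by (rule pd2_cont) (rule c f)+
  show 7: "continuous_on UNIV (QQ1 f1 f2 f3)" unfolding QQ1_def[abs_def] by (rule pd3_cont) (rule c f)+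
  show 8: "continuous_on UNIV (QQ2 f1 f2 f3)" unfolding QQ2_def[abs_def] by (rule pd3_cont) (rule c f)+
  show 9: "continuous_on UNIV (QQ3 f1 f2 f3)" unfolding QQ3_def[abs_def] by (rule pd3_cont) (rule c f)+
  show "continuous_on UNIV (QP f1 f2 f3)" unfolding QP_def[abs_def] using 7 8 9 by (intro continuous_intros)
  show "continuous_on UNIV (TT f1 f2 f3)" unfolding TT_def[abs_def] using 4 5 6 7 8 9 by (intro continuous_intros)
qed

lemma open_nz: "open N \<Longrightarrow> continuous_on UNIV (g :: 'a::topological_space \<Rightarrow> complex) \<Longrightarrow> open {s\<in>N. g s \<noteq> 0}"
proof -
  assume "open N" "continuous_on UNIV g"
  then have "open {s. g s \<noteq> (\<lambda>_. 0) s}" by (intro open_Collect_neq) (auto intro: continuous_intros)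
  then have "open (N \<inter> {s. g s \<noteq> 0})" using \<open>open N\<close> by auto
  moreover have "N \<inter> {s. g s \<noteq> 0} = {s\<in>N. g s \<noteq> 0}" by auto
  ultimately show ?thesis by simp
qed

lemma open_slice: "open G \<Longrightarrow> continuous_on UNIV h \<Longrightarrow> open {t. h t \<in> G}"
  using continuous_on_open_vimage[of UNIV h] by (auto simp: vimage_def)

lemma sl0: "open (G::pt set) \<Longrightarrow> open {t. (t, x1, x2, x3) \<in> G}"
  by (rule open_slice) (auto intro!: continuous_intros)
lemma sl1: "open (G::pt set) \<Longrightarrow> open {t. (x, t, x2, x3) \<in> G}"
  by (rule open_slice) (auto intro!: continuous_intros)
lemma sl2: "open (G::pt set) \<Longrightarrow> open {t. (x, x1, t, x3) \<in> G}"
  by (rule open_slice) (auto intro!: continuous_intros)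
lemma sl3: "open (G::pt set) \<Longrightarrow> open {t. (x, x1, x2, t) \<in> G}"
  by (rule open_slice) (auto intro!: continuous_intros)

lemma key_d:
  fixes h \<phi> :: "complex \<Rightarrow> complex"
  assumes "h holomorphic_on UNIV" "\<phi> holomorphic_on UNIV" "deriv \<phi> t0 \<noteq> 0" "open S" "t0 \<in> S"
    "\<And>t. t \<in> S \<Longrightarrow> deriv h (\<phi> t) = 0"
  shows "h y = h y'"
proof (rule ent_deriv0_open[OF assms(1)])
  show "open (\<phi> ` S)" by (rule ent_open_img[OF assms(2,3,4)])
  show "\<phi> ` S \<noteq> {}" using assms(5) by auto
  show "\<And>t. t \<in> \<phi> ` S \<Longrightarrow> deriv h t = 0" using assms(6) by auto
qed

lemma key_v:
  fixes h \<phi> :: "complex \<Rightarrow> complex"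
  assumes "h holomorphic_on UNIV" "\<phi> holomorphic_on UNIV" "deriv \<phi> t0 \<noteq> 0" "open S" "t0 \<in> S"
    "\<And>t. t \<in> S \<Longrightarrow> h (\<phi> t) = c"
  shows "h y = c"
proof (rule ent_eq_open[OF assms(1)])
  show "open (\<phi> ` S)" by (rule ent_open_img[OF assms(2,3,4)])
  show "\<phi> ` S \<noteq> {}" using assms(5) by auto
  show "\<And>t. t \<in> \<phi> ` S \<Longrightarrow> h t = c" using assms(6) by auto
qed

lemma alg1:
  fixes A1 A2 A3 B1 B2 B3 C1 C2 C3 p q r P1 P2 P3 Q1 Q2 Q3 :: complex
  assumes "A2*p + A3*q = 0" "B2*r + B3*p = 0" "C2*q + C3*r = 0"
   "A1 + A2*P3 + A3*Q2 = B3*P3" "B3*P3 = C2*Q2"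
   "A2*Q3 = B1 + B2*P1 + B3*Q3" "B1 + B2*P1 + B3*Q3 = C3*P1"
   "A3*P2 = B2*Q1" "B2*Q1 = C1 + C2*P2 + C3*Q1"
  shows "A3 * (p*q*r*(Q3*Q2*Q1 + P3*P2*P1)) = 0" "A2 * (p*q*r*(Q3*Q2*Q1 + P3*P2*P1)) = 0"
  using assms by algebra+

lemma SA:
  assumes g: "good f1 f2 f3" and G: "open G" "s0 \<in> G"
    and H: "\<And>s. s \<in> G \<Longrightarrow> QP f1 f2 f3 s \<noteq> 0 \<and> TT f1 f2 f3 s \<noteq> 0 \<and>
        pp f1 f2 f3 s \<noteq> 0 \<and> qq f1 f2 f3 s \<noteq> 0 \<and> rr f1 f2 f3 s \<noteq> 0"
  shows False
proof -
  note c = good_cd[OF g]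
  have A0: "pd2 f1 x1 (f3 x x1 x2) (f2 x x3 x1) = 0 \<and> pd3 f1 x1 (f3 x x1 x2) (f2 x x3 x1) = 0"
    if "(x, x1, x2, x3) \<in> G" for x x1 x2 x3
  proof -
    note e = eqs[OF g, where ya=x and yb=x1 and yc=x2 and yd=x3]
    note a = alg1[OF e]
    have nz: "pd1 f3 x x1 x2 * pd1 f2 x x3 x1 * pd1 f1 x x2 x3 *
      (pd3 f3 x x1 x2 * pd3 f2 x x3 x1 * pd3 f1 x x2 x3 + pd2 f3 x x1 x2 * pd2 f2 x x3 x1 * pd2 f1 x x2 x3) \<noteq> 0"
      using H[OF that] by (simp add: pt_defs)
    show ?thesis using a nz by simp
  qed
  have stepa: "f1 x1 v (f2 x x3 x1) = f1 x1 0 (f2 x x3 x1)" if "(x, x1, x2, x3) \<in> G" for x x1 x2 x3 v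
  proof (rule key_d[of "\<lambda>v. f1 x1 v (f2 x x3 x1)" "\<lambda>t. f3 x x1 t" x2 "{t. (x, x1, t, x3) \<in> G}"])
    show "(\<lambda>v. f1 x1 v (f2 x x3 x1)) holomorphic_on UNIV" by (rule hol2[OF c(1)])
    show "(\<lambda>t. f3 x x1 t) holomorphic_on UNIV" by (rule hol3[OF c(3)])
    show "deriv (\<lambda>t. f3 x x1 t) x2 \<noteq> 0" using H[OF that] by (simp add: pt_defs pd3_def)
    show "open {t. (x, x1, t, x3) \<in> G}" by (rule sl2[OF G(1)])
    show "x2 \<in> {t. (x, x1, t, x3) \<in> G}" using that by simp
    fix t assume "t \<in> {t. (x, x1, t, x3) \<in> G}"
    then show "deriv (\<lambda>v. f1 x1 v (f2 x x3 x1)) (f3 x x1 t) = 0"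
      using A0[of x x1 t x3] by (simp add: pd2_def)
  qed
  have stepb: "f1 x1 v w = f1 x1 0 w" if "(x, x1, x2, x3) \<in> G" for x x1 x2 x3 v w
  proof -
    have "(\<lambda>w. f1 x1 v w - f1 x1 0 w) w = 0"
    proof (rule key_v[of "\<lambda>w. f1 x1 v w - f1 x1 0 w" "\<lambda>t. f2 t x3 x1" x "{t. (t, x1, x2, x3) \<in> G}"])
      show "(\<lambda>w. f1 x1 v w - f1 x1 0 w) holomorphic_on UNIV"
        by (rule holomorphic_on_diff; rule hol3[OF c(1)])
      show "(\<lambda>t. f2 t x3 x1) holomorphic_on UNIV" by (rule hol1[OF c(2)])
      show "deriv (\<lambda>t. f2 t x3 x1) x \<noteq> 0" using H[OF that] by (simp add: pt_defs pd1_def)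
      show "open {t. (t, x1, x2, x3) \<in> G}" by (rule sl0[OF G(1)])
      show "x \<in> {t. (t, x1, x2, x3) \<in> G}" using that by simp
      fix t assume "t \<in> {t. (t, x1, x2, x3) \<in> G}"
      then show "f1 x1 v (f2 t x3 x1) - f1 x1 0 (f2 t x3 x1) = 0" using stepa[of t x1 x2 x3 v] by simp
    qed
    then show ?thesis by simp
  qed
  obtain y y1 y2 y3 where s0: "s0 = (y, y1, y2, y3)" by (cases s0) auto
  have stepc: "f1 u v w = f1 u 0 w" for u v w
  proof -
    have "(\<lambda>u. f1 u v w - f1 u 0 w) u = 0"
    proof (rule ent_eq_open[of "\<lambda>u. f1 u v w - f1 u 0 w" "{t. (y, t, y2, y3) \<in> G}"])
      show "(\<lambda>u. f1 u v w - f1 u 0 w) holomorphic_on UNIV"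
        by (rule holomorphic_on_diff; rule hol1[OF c(1)])
      show "open {t. (y, t, y2, y3) \<in> G}" by (rule sl1[OF G(1)])
      show "{t. (y, t, y2, y3) \<in> G} \<noteq> {}" using G(2) s0 by auto
      fix t assume "t \<in> {t. (y, t, y2, y3) \<in> G}"
      then show "f1 t v w - f1 t 0 w = 0" using stepb[of y t y2 y3 v w] by simp
    qed
    then show ?thesis by simp
  qed
  have pd3eq: "pd3 f1 u v w = pd3 f1 u 0 w" for u v w
  proof -
    have "(\<lambda>t. f1 u v t) = (\<lambda>t. f1 u 0 t)" using stepc[of u v] by (intro ext) simp
    then show ?thesis unfolding pd3_def by simp
  qed
  have stepd: "f1 x1 0 w = f1 x1 0 0" if "(x, x1, x2, x3) \<in> G" for x x1 x2 x3 w
  proof (rule key_d[of "\<lambda>w. f1 x1 0 w" "\<lambda>t. f2 t x3 x1" x "{t. (t, x1, x2, x3) \<in> G}"])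
    show "(\<lambda>w. f1 x1 0 w) holomorphic_on UNIV" by (rule hol3[OF c(1)])
    show "(\<lambda>t. f2 t x3 x1) holomorphic_on UNIV" by (rule hol1[OF c(2)])
    show "deriv (\<lambda>t. f2 t x3 x1) x \<noteq> 0" using H[OF that] by (simp add: pt_defs pd1_def)
    show "open {t. (t, x1, x2, x3) \<in> G}" by (rule sl0[OF G(1)])
    show "x \<in> {t. (t, x1, x2, x3) \<in> G}" using that by simp
    fix t assume "t \<in> {t. (t, x1, x2, x3) \<in> G}"
    then have "pd3 f1 x1 (f3 t x1 x2) (f2 t x3 x1) = 0" using A0[of t x1 x2 x3] by simp
    then show "deriv (\<lambda>w. f1 x1 0 w) (f2 t x3 x1) = 0"
      using pd3eq[of x1 "f3 t x1 x2" "f2 t x3 x1"] by (simp add: pd3_def)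
  qed
  have stepe: "f1 u 0 w = f1 u 0 0" for u w
  proof -
    have "(\<lambda>u. f1 u 0 w - f1 u 0 0) u = 0"
    proof (rule ent_eq_open[of "\<lambda>u. f1 u 0 w - f1 u 0 0" "{t. (y, t, y2, y3) \<in> G}"])
      show "(\<lambda>u. f1 u 0 w - f1 u 0 0) holomorphic_on UNIV"
        by (rule holomorphic_on_diff; rule hol1[OF c(1)])
      show "open {t. (y, t, y2, y3) \<in> G}" by (rule sl1[OF G(1)])
      show "{t. (y, t, y2, y3) \<in> G} \<noteq> {}" using G(2) s0 by auto
      fix t assume "t \<in> {t. (y, t, y2, y3) \<in> G}"
      then show "f1 t 0 w - f1 t 0 0 = 0" using stepd[of y t y2 y3 w] by simp
    qed
    then show ?thesis by simp
  qed
  have "(\<lambda>t. f1 y y2 t) = (\<lambda>t. f1 y 0 0)"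
  proof
    fix t show "f1 y y2 t = f1 y 0 0" using stepc[of y y2 t] stepe[of y t] by simp
  qed
  then have "pd3 f1 y y2 y3 = 0" unfolding pd3_def by simp
  then show False using H[OF G(2)] s0 by (simp add: pt_defs)
qed

lemma did: "deriv (\<lambda>t::complex. t) x = 1" by (rule DERIV_imp_deriv[OF DERIV_ident])

lemma pd1_const: "cdiff3 f \<Longrightarrow> (\<And>t. f t v w = k) \<Longrightarrow> pd1 f u v w = 0"
  using deriv_eq_fun[OF hd1 DERIV_const] by blast
lemma pd2_const: "cdiff3 f \<Longrightarrow> (\<And>t. f u t w = k) \<Longrightarrow> pd2 f u v w = 0"
  using deriv_eq_fun[OF hd2 DERIV_const] by blast
lemma pd3_const: "cdiff3 f \<Longrightarrow> (\<And>t. f u v t = k) \<Longrightarrow> pd3 f u v w = 0"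
  using deriv_eq_fun[OF hd3 DERIV_const] by blast

lemma LP:
  assumes g: "good f1 f2 f3" and V: "open V" "s0 \<in> V"
    and H: "\<And>s. s \<in> V \<Longrightarrow> QP f1 f2 f3 s \<noteq> 0 \<and> TT f1 f2 f3 s \<noteq> 0 \<and> pp f1 f2 f3 s = 0"
    and s: "s \<in> V"
  shows "qq f1 f2 f3 s * rr f1 f2 f3 s = 0"
proof (rule ccontr)
  assume s1nz: "qq f1 f2 f3 s * rr f1 f2 f3 s \<noteq> 0"
  note c = good_cd[OF g]
  obtain y y1 y2 y3 where s0: "s0 = (y, y1, y2, y3)" by (cases s0) auto
  have i0: "f3 u x1 x2 = f3 0 x1 x2" if "(x, x1, x2, x3) \<in> V" for x x1 x2 x3 u
  proof (rule key_d[of "\<lambda>t. f3 t x1 x2" "\<lambda>t. t" x "{t. (t, x1, x2, x3) \<in> V}"])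
    show "(\<lambda>t. f3 t x1 x2) holomorphic_on UNIV" by (rule hol1[OF c(3)])
    show "(\<lambda>t. t) holomorphic_on UNIV" by simp
    show "deriv (\<lambda>t. t) x \<noteq> 0" by (simp add: did)
    show "open {t. (t, x1, x2, x3) \<in> V}" by (rule sl0[OF V(1)])
    show "x \<in> {t. (t, x1, x2, x3) \<in> V}" using that by simp
    fix t assume "t \<in> {t. (t, x1, x2, x3) \<in> V}"
    then show "deriv (\<lambda>t. f3 t x1 x2) t = 0" using H[of "(t, x1, x2, x3)"] by (simp add: pt_defs pd1_def)
  qed
  have i1: "f3 u x1 w = f3 0 x1 w" if "(x, x1, x2, x3) \<in> V" for x x1 x2 x3 u w
  proof -
    have "(\<lambda>t. f3 u x1 t - f3 0 x1 t) w = 0"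
    proof (rule ent_eq_open[of "\<lambda>t. f3 u x1 t - f3 0 x1 t" "{t. (x, x1, t, x3) \<in> V}"])
      show "(\<lambda>t. f3 u x1 t - f3 0 x1 t) holomorphic_on UNIV"
        by (rule holomorphic_on_diff; rule hol3[OF c(3)])
      show "open {t. (x, x1, t, x3) \<in> V}" by (rule sl2[OF V(1)])
      show "{t. (x, x1, t, x3) \<in> V} \<noteq> {}" using that by auto
      fix t assume "t \<in> {t. (x, x1, t, x3) \<in> V}"
      then show "f3 u x1 t - f3 0 x1 t = 0" using i0[of x x1 t x3 u] by simp
    qed
    then show ?thesis by simp
  qed
  have i2: "f3 u v w = f3 0 v w" for u v w
  proof -
    have "(\<lambda>t. f3 u t w - f3 0 t w) v = 0"
    proof (rule ent_eq_open[of "\<lambda>t. f3 u t w - f3 0 t w" "{t. (y, t, y2, y3) \<in> V}"])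
      show "(\<lambda>t. f3 u t w - f3 0 t w) holomorphic_on UNIV"
        by (rule holomorphic_on_diff; rule hol2[OF c(3)])
      show "open {t. (y, t, y2, y3) \<in> V}" by (rule sl1[OF V(1)])
      show "{t. (y, t, y2, y3) \<in> V} \<noteq> {}" using V(2) s0 by auto
      fix t assume "t \<in> {t. (y, t, y2, y3) \<in> V}"
      then show "f3 u t w - f3 0 t w = 0" using i1[of y t y2 y3 u w] by simp
    qed
    then show ?thesis by simp
  qed
  define V1 where "V1 = {s \<in> V. qq f1 f2 f3 s * rr f1 f2 f3 s \<noteq> 0}"
  have V1o: "open V1" unfolding V1_def
    by (intro open_nz V(1) continuous_on_mult pt_cont[OF g])
  have V1s: "s \<in> V1" using s s1nz by (simp add: V1_def)
  have V1H: "QP f1 f2 f3 s \<noteq> 0 \<and> pp f1 f2 f3 s = 0 \<and> qq f1 f2 f3 s \<noteq> 0 \<and> rr f1 f2 f3 s \<noteq> 0"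
    if "s \<in> V1" for s using that H unfolding V1_def by auto
  have A3: "pd3 f1 x1 (f3 x x1 x2) (f2 x x3 x1) = 0" if "(x, x1, x2, x3) \<in> V1" for x x1 x2 x3
  proof -
    note e = eqs(1)[OF g, where ya=x and yb=x1 and yc=x2 and yd=x3]
    from V1H[OF that] have "pd1 f3 x x1 x2 = 0" "pd1 f2 x x3 x1 \<noteq> 0" by (auto simp: pt_defs)
    with e show ?thesis by simp
  qed
  have sa: "f1 x1 (f3 x x1 x2) w = f1 x1 (f3 x x1 x2) 0" if "(x, x1, x2, x3) \<in> V1" for x x1 x2 x3 w
  proof (rule key_d[of "\<lambda>w. f1 x1 (f3 x x1 x2) w" "\<lambda>t. f2 t x3 x1" x "{t. (t, x1, x2, x3) \<in> V1}"])
    show "(\<lambda>w. f1 x1 (f3 x x1 x2) w) holomorphic_on UNIV" by (rule hol3[OF c(1)])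
    show "(\<lambda>t. f2 t x3 x1) holomorphic_on UNIV" by (rule hol1[OF c(2)])
    show "deriv (\<lambda>t. f2 t x3 x1) x \<noteq> 0" using V1H[OF that] by (simp add: pt_defs pd1_def)
    show "open {t. (t, x1, x2, x3) \<in> V1}" by (rule sl0[OF V1o])
    show "x \<in> {t. (t, x1, x2, x3) \<in> V1}" using that by simp
    fix t assume "t \<in> {t. (t, x1, x2, x3) \<in> V1}"
    then have "pd3 f1 x1 (f3 t x1 x2) (f2 t x3 x1) = 0" using A3[of t x1 x2 x3] by simp
    moreover have "f3 t x1 x2 = f3 x x1 x2" using i2[of t x1 x2] i2[of x x1 x2] by simp
    ultimately show "deriv (\<lambda>w. f1 x1 (f3 x x1 x2) w) (f2 t x3 x1) = 0" by (simp add: pd3_def)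
  qed
  have sb: "f1 x1 v w = f1 x1 v 0" if "(x, x1, x2, x3) \<in> V1" for x x1 x2 x3 v w
  proof -
    have "(\<lambda>v. f1 x1 v w - f1 x1 v 0) v = 0"
    proof (rule key_v[of "\<lambda>v. f1 x1 v w - f1 x1 v 0" "\<lambda>t. f3 x x1 t" x2 "{t. (x, x1, t, x3) \<in> V1}"])
      show "(\<lambda>v. f1 x1 v w - f1 x1 v 0) holomorphic_on UNIV"
        by (rule holomorphic_on_diff; rule hol2[OF c(1)])
      show "(\<lambda>t. f3 x x1 t) holomorphic_on UNIV" by (rule hol3[OF c(3)])
      show "deriv (\<lambda>t. f3 x x1 t) x2 \<noteq> 0" using V1H[OF that] by (simp add: pt_defs pd3_def)
      show "open {t. (x, x1, t, x3) \<in> V1}" by (rule sl2[OF V1o])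
      show "x2 \<in> {t. (x, x1, t, x3) \<in> V1}" using that by simp
      fix t assume "t \<in> {t. (x, x1, t, x3) \<in> V1}"
      then show "f1 x1 (f3 x x1 t) w - f1 x1 (f3 x x1 t) 0 = 0" using sa[of x x1 t x3 w] by simp
    qed
    then show ?thesis by simp
  qed
  obtain z z1 z2 z3 where sz: "s = (z, z1, z2, z3)" by (cases s) auto
  have sc: "f1 u v w = f1 u v 0" for u v w
  proof -
    have "(\<lambda>t. f1 t v w - f1 t v 0) u = 0"
    proof (rule ent_eq_open[of "\<lambda>t. f1 t v w - f1 t v 0" "{t. (z, t, z2, z3) \<in> V1}"])
      show "(\<lambda>t. f1 t v w - f1 t v 0) holomorphic_on UNIV"
        by (rule holomorphic_on_diff; rule hol1[OF c(1)])
      show "open {t. (z, t, z2, z3) \<in> V1}" by (rule sl1[OF V1o])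
      show "{t. (z, t, z2, z3) \<in> V1} \<noteq> {}" using V1s sz by auto
      fix t assume "t \<in> {t. (z, t, z2, z3) \<in> V1}"
      then show "f1 t v w - f1 t v 0 = 0" using sb[of z t z2 z3 v w] by simp
    qed
    then show ?thesis by simp
  qed
  have "pd3 f1 z z2 z3 = 0" by (rule pd3_const[OF c(1)]) (rule sc)
  then have "QQ1 f1 f2 f3 s = 0" using sz by (simp add: QQ1_def)
  then have "QP f1 f2 f3 s = 0" by (simp add: QP_def)
  then show False using V1H[OF V1s] by simp
qed

definition ri :: "pt \<Rightarrow> pt" where "ri s = (fst s, snd (snd (snd s)), fst (snd s), fst (snd (snd s)))"
definition ro :: "pt \<Rightarrow> pt" where "ro s = (fst s, fst (snd (snd s)), snd (snd (snd s)), fst (snd s))"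

lemma ri_ro: "ri (ro s) = s" by (cases s) (auto simp: ri_def ro_def)

lemma ri_cont: "continuous_on UNIV ri" unfolding ri_def by (intro continuous_intros)

lemma open_ri: "open V \<Longrightarrow> open {s. ri s \<in> V}"
  by (rule open_slice[OF _ ri_cont])

lemma good_rot: "good f1 f2 f3 \<Longrightarrow> good f2 f3 f1"
  unfolding good_def by metis

lemma rot_rel:
  "pp f2 f3 f1 s = rr f1 f2 f3 (ri s)" "qq f2 f3 f1 s = pp f1 f2 f3 (ri s)" "rr f2 f3 f1 s = qq f1 f2 f3 (ri s)"
  "PP1 f2 f3 f1 s = PP2 f1 f2 f3 (ri s)" "PP2 f2 f3 f1 s = PP3 f1 f2 f3 (ri s)" "PP3 f2 f3 f1 s = PP1 f1 f2 f3 (ri s)"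
  "QQ1 f2 f3 f1 s = QQ2 f1 f2 f3 (ri s)" "QQ2 f2 f3 f1 s = QQ3 f1 f2 f3 (ri s)" "QQ3 f2 f3 f1 s = QQ1 f1 f2 f3 (ri s)"
  "QP f2 f3 f1 s = QP f1 f2 f3 (ri s)" "TT f2 f3 f1 s = TT f1 f2 f3 (ri s)"
  by (cases s; simp add: pt_defs ri_def mult_ac)+

lemma IU:
  assumes g: "good f1 f2 f3" and V: "open V" "s0 \<in> V"
    and H: "\<And>s. s \<in> V \<Longrightarrow> pp f1 f2 f3 s = 0"
  shows "f3 u v w = f3 0 v w"
proof -
  note c = good_cd[OF g]
  obtain y y1 y2 y3 where s0: "s0 = (y, y1, y2, y3)" by (cases s0) auto
  have i0: "f3 u x1 x2 = f3 0 x1 x2" if "(x, x1, x2, x3) \<in> V" for x x1 x2 x3 u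
  proof (rule key_d[of "\<lambda>t. f3 t x1 x2" "\<lambda>t. t" x "{t. (t, x1, x2, x3) \<in> V}"])
    show "(\<lambda>t. f3 t x1 x2) holomorphic_on UNIV" by (rule hol1[OF c(3)])
    show "(\<lambda>t. t) holomorphic_on UNIV" by simp
    show "deriv (\<lambda>t. t) x \<noteq> 0" by (simp add: did)
    show "open {t. (t, x1, x2, x3) \<in> V}" by (rule sl0[OF V(1)])
    show "x \<in> {t. (t, x1, x2, x3) \<in> V}" using that by simp
    fix t assume "t \<in> {t. (t, x1, x2, x3) \<in> V}"
    then show "deriv (\<lambda>t. f3 t x1 x2) t = 0" using H[of "(t, x1, x2, x3)"] by (simp add: pt_defs pd1_def)
  qed
  have i1: "f3 u x1 w = f3 0 x1 w" if "(x, x1, x2, x3) \<in> V" for x x1 x2 x3 u w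
  proof -
    have "(\<lambda>t. f3 u x1 t - f3 0 x1 t) w = 0"
    proof (rule ent_eq_open[of "\<lambda>t. f3 u x1 t - f3 0 x1 t" "{t. (x, x1, t, x3) \<in> V}"])
      show "(\<lambda>t. f3 u x1 t - f3 0 x1 t) holomorphic_on UNIV"
        by (rule holomorphic_on_diff; rule hol3[OF c(3)])
      show "open {t. (x, x1, t, x3) \<in> V}" by (rule sl2[OF V(1)])
      show "{t. (x, x1, t, x3) \<in> V} \<noteq> {}" using that by auto
      fix t assume "t \<in> {t. (x, x1, t, x3) \<in> V}"
      then show "f3 u x1 t - f3 0 x1 t = 0" using i0[of x x1 t x3 u] by simp
    qed
    then show ?thesis by simp
  qed
  have "(\<lambda>t. f3 u t w - f3 0 t w) v = 0"
  proof (rule ent_eq_open[of "\<lambda>t. f3 u t w - f3 0 t w" "{t. (y, t, y2, y3) \<in> V}"])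
    show "(\<lambda>t. f3 u t w - f3 0 t w) holomorphic_on UNIV"
      by (rule holomorphic_on_diff; rule hol2[OF c(3)])
    show "open {t. (y, t, y2, y3) \<in> V}" by (rule sl1[OF V(1)])
    show "{t. (y, t, y2, y3) \<in> V} \<noteq> {}" using V(2) s0 by auto
    fix t assume "t \<in> {t. (y, t, y2, y3) \<in> V}"
    then show "f3 u t w - f3 0 t w = 0" using i1[of y t y2 y3 u w] by simp
  qed
  then show ?thesis by simp
qed

lemma IV:
  assumes g: "good f1 f2 f3" and V: "open V" "s0 \<in> V"
    and H: "\<And>s. s \<in> V \<Longrightarrow> PP3 f1 f2 f3 s = 0"
  shows "f3 u v w = f3 u 0 w"
proof -
  note c = good_cd[OF g]
  obtain y y1 y2 y3 where s0: "s0 = (y, y1, y2, y3)" by (cases s0) auto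
  have i0: "f3 x v x2 = f3 x 0 x2" if "(x, x1, x2, x3) \<in> V" for x x1 x2 x3 v
  proof (rule key_d[of "\<lambda>t. f3 x t x2" "\<lambda>t. t" x1 "{t. (x, t, x2, x3) \<in> V}"])
    show "(\<lambda>t. f3 x t x2) holomorphic_on UNIV" by (rule hol2[OF c(3)])
    show "(\<lambda>t. t) holomorphic_on UNIV" by simp
    show "deriv (\<lambda>t. t) x1 \<noteq> 0" by (simp add: did)
    show "open {t. (x, t, x2, x3) \<in> V}" by (rule sl1[OF V(1)])
    show "x1 \<in> {t. (x, t, x2, x3) \<in> V}" using that by simp
    fix t assume "t \<in> {t. (x, t, x2, x3) \<in> V}"
    then show "deriv (\<lambda>t. f3 x t x2) t = 0" using H[of "(x, t, x2, x3)"] by (simp add: pt_defs pd2_def)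
  qed
  have i1: "f3 u v x2 = f3 u 0 x2" if "(x, x1, x2, x3) \<in> V" for x x1 x2 x3 u v
  proof -
    have "(\<lambda>t. f3 t v x2 - f3 t 0 x2) u = 0"
    proof (rule ent_eq_open[of "\<lambda>t. f3 t v x2 - f3 t 0 x2" "{t. (t, x1, x2, x3) \<in> V}"])
      show "(\<lambda>t. f3 t v x2 - f3 t 0 x2) holomorphic_on UNIV"
        by (rule holomorphic_on_diff; rule hol1[OF c(3)])
      show "open {t. (t, x1, x2, x3) \<in> V}" by (rule sl0[OF V(1)])
      show "{t. (t, x1, x2, x3) \<in> V} \<noteq> {}" using that by auto
      fix t assume "t \<in> {t. (t, x1, x2, x3) \<in> V}"
      then show "f3 t v x2 - f3 t 0 x2 = 0" using i0[of t x1 x2 x3 v] by simp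
    qed
    then show ?thesis by simp
  qed
  have "(\<lambda>t. f3 u v t - f3 u 0 t) w = 0"
  proof (rule ent_eq_open[of "\<lambda>t. f3 u v t - f3 u 0 t" "{t. (y, y1, t, y3) \<in> V}"])
    show "(\<lambda>t. f3 u v t - f3 u 0 t) holomorphic_on UNIV"
      by (rule holomorphic_on_diff; rule hol3[OF c(3)])
    show "open {t. (y, y1, t, y3) \<in> V}" by (rule sl2[OF V(1)])
    show "{t. (y, y1, t, y3) \<in> V} \<noteq> {}" using V(2) s0 by auto
    fix t assume "t \<in> {t. (y, y1, t, y3) \<in> V}"
    then show "f3 u v t - f3 u 0 t = 0" using i1[of y y1 t y3 u v] by simp
  qed
  then show ?thesis by simp
qed

lemma rot_open:
  assumes "open V" "s0 \<in> V"
  shows "open {s. ri s \<in> V}" "ro s0 \<in> {s. ri s \<in> V}"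
  using open_ri[OF assms(1)] assms(2) ri_ro by auto

lemma IU_all:
  assumes g: "good f1 f2 f3" and V: "open V" "s0 \<in> V"
    and H: "\<And>s. s \<in> V \<Longrightarrow> pp f1 f2 f3 s = 0 \<and> qq f1 f2 f3 s = 0 \<and> rr f1 f2 f3 s = 0"
  shows "f3 u v w = f3 0 v w" "f1 u v w = f1 0 v w" "f2 u v w = f2 0 v w"
proof -
  show "f3 u v w = f3 0 v w" by (rule IU[OF g V]) (use H in blast)
  note r = rot_open[OF V]
  show "f1 u v w = f1 0 v w"
    by (rule IU[OF good_rot[OF g] r]) (use H in \<open>auto simp: rot_rel[of f2 f3 f1]\<close>)
  show "f2 u v w = f2 0 v w"
    by (rule IU[OF good_rot[OF good_rot[OF g]] rot_open[OF r]])
      (use H in \<open>auto simp: rot_rel[of f2 f3 f1] rot_rel[of f3 f1 f2]\<close>)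
qed

lemma LPQ:
  assumes g: "good f1 f2 f3" and V: "open V" "s0 \<in> V"
    and H: "\<And>s. s \<in> V \<Longrightarrow> QP f1 f2 f3 s \<noteq> 0 \<and> TT f1 f2 f3 s \<noteq> 0 \<and> pp f1 f2 f3 s = 0 \<and> qq f1 f2 f3 s = 0"
    and s: "s \<in> V"
  shows "rr f1 f2 f3 s = 0"
proof (rule ccontr)
  assume snz: "rr f1 f2 f3 s \<noteq> 0"
  note c = good_cd[OF g]
  note r = rot_open[OF V]
  have j2: "f2 u v w = f2 0 v w" for u v w
    by (rule IU[OF good_rot[OF good_rot[OF g]] rot_open[OF r]])
      (use H in \<open>auto simp: rot_rel[of f2 f3 f1] rot_rel[of f3 f1 f2]\<close>)
  define V1 where "V1 = {s \<in> V. rr f1 f2 f3 s \<noteq> 0}"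
  have V1o: "open V1" unfolding V1_def by (intro open_nz V(1) pt_cont[OF g])
  have V1s: "s \<in> V1" using s snz by (simp add: V1_def)
  have V1H: "QP f1 f2 f3 s \<noteq> 0 \<and> qq f1 f2 f3 s = 0 \<and> rr f1 f2 f3 s \<noteq> 0"
    if "s \<in> V1" for s using that H unfolding V1_def by auto
  have C3: "pd3 f3 x3 (f2 x x3 x1) (f1 x x2 x3) = 0" if "(x, x1, x2, x3) \<in> V1" for x x1 x2 x3
  proof -
    note e = eqs(3)[OF g, where ya=x and yb=x1 and yc=x2 and yd=x3]
    from V1H[OF that] have "pd1 f2 x x3 x1 = 0" "pd1 f1 x x2 x3 \<noteq> 0" by (auto simp: pt_defs)
    with e show ?thesis by simp
  qed
  have sa: "f3 x3 (f2 x x3 x1) w = f3 x3 (f2 x x3 x1) 0" if "(x, x1, x2, x3) \<in> V1" for x x1 x2 x3 w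
  proof (rule key_d[of "\<lambda>w. f3 x3 (f2 x x3 x1) w" "\<lambda>t. f1 t x2 x3" x "{t. (t, x1, x2, x3) \<in> V1}"])
    show "(\<lambda>w. f3 x3 (f2 x x3 x1) w) holomorphic_on UNIV" by (rule hol3[OF c(3)])
    show "(\<lambda>t. f1 t x2 x3) holomorphic_on UNIV" by (rule hol1[OF c(1)])
    show "deriv (\<lambda>t. f1 t x2 x3) x \<noteq> 0" using V1H[OF that] by (simp add: pt_defs pd1_def)
    show "open {t. (t, x1, x2, x3) \<in> V1}" by (rule sl0[OF V1o])
    show "x \<in> {t. (t, x1, x2, x3) \<in> V1}" using that by simp
    fix t assume "t \<in> {t. (t, x1, x2, x3) \<in> V1}"
    then have "pd3 f3 x3 (f2 t x3 x1) (f1 t x2 x3) = 0" using C3[of t x1 x2 x3] by simp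
    moreover have "f2 t x3 x1 = f2 x x3 x1" using j2[of t x3 x1] j2[of x x3 x1] by simp
    ultimately show "deriv (\<lambda>w. f3 x3 (f2 x x3 x1) w) (f1 t x2 x3) = 0" by (simp add: pd3_def)
  qed
  have sb: "f3 x3 v w = f3 x3 v 0" if "(x, x1, x2, x3) \<in> V1" for x x1 x2 x3 v w
  proof -
    have "(\<lambda>v. f3 x3 v w - f3 x3 v 0) v = 0"
    proof (rule key_v[of "\<lambda>v. f3 x3 v w - f3 x3 v 0" "\<lambda>t. f2 x x3 t" x1 "{t. (x, t, x2, x3) \<in> V1}"])
      show "(\<lambda>v. f3 x3 v w - f3 x3 v 0) holomorphic_on UNIV"
        by (rule holomorphic_on_diff; rule hol2[OF c(3)])
      show "(\<lambda>t. f2 x x3 t) holomorphic_on UNIV" by (rule hol3[OF c(2)])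
      show "deriv (\<lambda>t. f2 x x3 t) x1 \<noteq> 0" using V1H[OF that] by (simp add: pt_defs pd3_def)
      show "open {t. (x, t, x2, x3) \<in> V1}" by (rule sl1[OF V1o])
      show "x1 \<in> {t. (x, t, x2, x3) \<in> V1}" using that by simp
      fix t assume "t \<in> {t. (x, t, x2, x3) \<in> V1}"
      then show "f3 x3 (f2 x x3 t) w - f3 x3 (f2 x x3 t) 0 = 0" using sa[of x t x2 x3 w] by simp
    qed
    then show ?thesis by simp
  qed
  obtain z z1 z2 z3 where sz: "s = (z, z1, z2, z3)" by (cases s) auto
  have sc: "f3 u v w = f3 u v 0" for u v w
  proof -
    have "(\<lambda>t. f3 t v w - f3 t v 0) u = 0"
    proof (rule ent_eq_open[of "\<lambda>t. f3 t v w - f3 t v 0" "{t. (z, z1, z2, t) \<in> V1}"])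
      show "(\<lambda>t. f3 t v w - f3 t v 0) holomorphic_on UNIV"
        by (rule holomorphic_on_diff; rule hol1[OF c(3)])
      show "open {t. (z, z1, z2, t) \<in> V1}" by (rule sl3[OF V1o])
      show "{t. (z, z1, z2, t) \<in> V1} \<noteq> {}" using V1s sz by auto
      fix t assume "t \<in> {t. (z, z1, z2, t) \<in> V1}"
      then show "f3 t v w - f3 t v 0 = 0" using sb[of z z1 z2 t v w] by simp
    qed
    then show ?thesis by simp
  qed
  have "pd3 f3 z z1 z2 = 0" by (rule pd3_const[OF c(3)]) (rule sc)
  then have "QQ3 f1 f2 f3 s = 0" using sz by (simp add: QQ3_def)
  then have "QP f1 f2 f3 s = 0" by (simp add: QP_def)
  then show False using V1H[OF V1s] by simp
qed

lemma alg2: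
  fixes A1 A2 A3 B1 B2 B3 C1 C2 C3 P1 P2 P3 Q1 Q2 Q3 :: complex
  assumes "A1 = 0" "B1 = 0" "C1 = 0"
   "A1 + A2*P3 + A3*Q2 = B3*P3" "B3*P3 = C2*Q2"
   "A2*Q3 = B1 + B2*P1 + B3*Q3" "B1 + B2*P1 + B3*Q3 = C3*P1"
   "A3*P2 = B2*Q1" "B2*Q1 = C1 + C2*P2 + C3*Q1"
  shows "A3 * (Q3*Q2*Q1 + P3*P2*P1)^2 = 0"
  using assms by algebra

lemma LFIN1:
  assumes g: "good f1 f2 f3" and V: "open V" "s0 \<in> V"
    and H: "\<And>s. s \<in> V \<Longrightarrow> QP f1 f2 f3 s \<noteq> 0 \<and> TT f1 f2 f3 s \<noteq> 0 \<and>
       pp f1 f2 f3 s = 0 \<and> qq f1 f2 f3 s = 0 \<and> rr f1 f2 f3 s = 0"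
    and s: "s \<in> V"
  shows "PP2 f1 f2 f3 s = 0"
proof (rule ccontr)
  assume snz: "PP2 f1 f2 f3 s \<noteq> 0"
  note c = good_cd[OF g]
  have H': "\<And>s. s \<in> V \<Longrightarrow> pp f1 f2 f3 s = 0 \<and> qq f1 f2 f3 s = 0 \<and> rr f1 f2 f3 s = 0"
    using H by blast
  note iu = IU_all[OF g V H']
  have z1: "pd1 f1 u v w = 0" for u v w by (rule pd1_const[OF c(1)]) (rule iu(2))
  have z2: "pd1 f2 u v w = 0" for u v w by (rule pd1_const[OF c(2)]) (rule iu(3))
  have z3: "pd1 f3 u v w = 0" for u v w by (rule pd1_const[OF c(3)]) (rule iu(1))
  have A3: "pd3 f1 x1 (f3 x x1 x2) (f2 x x3 x1) = 0" if "(x, x1, x2, x3) \<in> V" for x x1 x2 x3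
  proof -
    note e = eqs(4-9)[OF g, where ya=x and yb=x1 and yc=x2 and yd=x3]
    note a = alg2[OF z1 z2 z3 e]
    have "TT f1 f2 f3 (x, x1, x2, x3) \<noteq> 0" using H[OF that] by simp
    then have "pd3 f3 x x1 x2 * pd3 f2 x x3 x1 * pd3 f1 x x2 x3 + pd2 f3 x x1 x2 * pd2 f2 x x3 x1 * pd2 f1 x x2 x3 \<noteq> 0"
      by (simp add: TT_def pt_defs)
    with a show ?thesis by simp
  qed
  define V1 where "V1 = {s \<in> V. PP2 f1 f2 f3 s \<noteq> 0}"
  have V1o: "open V1" unfolding V1_def by (intro open_nz V(1) pt_cont[OF g])
  have V1s: "s \<in> V1" using s snz by (simp add: V1_def)
  have V1H: "QP f1 f2 f3 s \<noteq> 0 \<and> PP2 f1 f2 f3 s \<noteq> 0 \<and> s \<in> V"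
    if "s \<in> V1" for s using that H unfolding V1_def by auto
  have sa: "f1 x1 (f3 x x1 x2) w = f1 x1 (f3 x x1 x2) 0" if "(x, x1, x2, x3) \<in> V1" for x x1 x2 x3 w
  proof (rule key_d[of "\<lambda>w. f1 x1 (f3 x x1 x2) w" "\<lambda>t. f2 x t x1" x3 "{t. (x, x1, x2, t) \<in> V1}"])
    show "(\<lambda>w. f1 x1 (f3 x x1 x2) w) holomorphic_on UNIV" by (rule hol3[OF c(1)])
    show "(\<lambda>t. f2 x t x1) holomorphic_on UNIV" by (rule hol2[OF c(2)])
    show "deriv (\<lambda>t. f2 x t x1) x3 \<noteq> 0" using V1H[OF that] by (simp add: pt_defs pd2_def)
    show "open {t. (x, x1, x2, t) \<in> V1}" by (rule sl3[OF V1o])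
    show "x3 \<in> {t. (x, x1, x2, t) \<in> V1}" using that by simp
    fix t assume "t \<in> {t. (x, x1, x2, t) \<in> V1}"
    then have "(x, x1, x2, t) \<in> V" using V1H by blast
    then have "pd3 f1 x1 (f3 x x1 x2) (f2 x t x1) = 0" using A3[of x x1 x2 t] by simp
    then show "deriv (\<lambda>w. f1 x1 (f3 x x1 x2) w) (f2 x t x1) = 0" by (simp add: pd3_def)
  qed
  have sb: "f1 x1 v w = f1 x1 v 0" if "(x, x1, x2, x3) \<in> V1" for x x1 x2 x3 v w
  proof -
    have "(\<lambda>v. f1 x1 v w - f1 x1 v 0) v = 0"
    proof (rule key_v[of "\<lambda>v. f1 x1 v w - f1 x1 v 0" "\<lambda>t. f3 x x1 t" x2 "{t. (x, x1, t, x3) \<in> V1}"])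
      show "(\<lambda>v. f1 x1 v w - f1 x1 v 0) holomorphic_on UNIV"
        by (rule holomorphic_on_diff; rule hol2[OF c(1)])
      show "(\<lambda>t. f3 x x1 t) holomorphic_on UNIV" by (rule hol3[OF c(3)])
      show "deriv (\<lambda>t. f3 x x1 t) x2 \<noteq> 0" using V1H[OF that] by (simp add: pt_defs pd3_def)
      show "open {t. (x, x1, t, x3) \<in> V1}" by (rule sl2[OF V1o])
      show "x2 \<in> {t. (x, x1, t, x3) \<in> V1}" using that by simp
      fix t assume "t \<in> {t. (x, x1, t, x3) \<in> V1}"
      then show "f1 x1 (f3 x x1 t) w - f1 x1 (f3 x x1 t) 0 = 0" using sa[of x x1 t x3 w] by simp
    qed
    then show ?thesis by simp
  qed
  obtain z z1 z2 z3 where sz: "s = (z, z1, z2, z3)" by (cases s) auto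
  have sc: "f1 u v w = f1 u v 0" for u v w
  proof -
    have "(\<lambda>t. f1 t v w - f1 t v 0) u = 0"
    proof (rule ent_eq_open[of "\<lambda>t. f1 t v w - f1 t v 0" "{t. (z, t, z2, z3) \<in> V1}"])
      show "(\<lambda>t. f1 t v w - f1 t v 0) holomorphic_on UNIV"
        by (rule holomorphic_on_diff; rule hol1[OF c(1)])
      show "open {t. (z, t, z2, z3) \<in> V1}" by (rule sl1[OF V1o])
      show "{t. (z, t, z2, z3) \<in> V1} \<noteq> {}" using V1s sz by auto
      fix t assume "t \<in> {t. (z, t, z2, z3) \<in> V1}"
      then show "f1 t v w - f1 t v 0 = 0" using sb[of z t z2 z3 v w] by simp
    qed
    then show ?thesis by simp
  qed
  have "pd3 f1 z z2 z3 = 0" by (rule pd3_const[OF c(1)]) (rule sc)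
  then have "QQ1 f1 f2 f3 s = 0" using sz by (simp add: QQ1_def)
  then have "QP f1 f2 f3 s = 0" by (simp add: QP_def)
  then show False using V1H[OF V1s] by simp
qed

lemma LP_r1:
  assumes g: "good f1 f2 f3" and V: "open V" "s0 \<in> V"
    and H: "\<And>s. s \<in> V \<Longrightarrow> QP f1 f2 f3 s \<noteq> 0 \<and> TT f1 f2 f3 s \<noteq> 0 \<and> rr f1 f2 f3 s = 0"
    and s: "s \<in> V"
  shows "pp f1 f2 f3 s * qq f1 f2 f3 s = 0"
proof -
  have "qq f2 f3 f1 (ro s) * rr f2 f3 f1 (ro s) = 0"
    by (rule LP[OF good_rot[OF g] rot_open[OF V]]) (use H s in \<open>auto simp: rot_rel[of f2 f3 f1] ri_ro\<close>)
  then show ?thesis by (simp add: rot_rel[of f2 f3 f1] ri_ro)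
qed

lemma LP_r2:
  assumes g: "good f1 f2 f3" and V: "open V" "s0 \<in> V"
    and H: "\<And>s. s \<in> V \<Longrightarrow> QP f1 f2 f3 s \<noteq> 0 \<and> TT f1 f2 f3 s \<noteq> 0 \<and> qq f1 f2 f3 s = 0"
    and s: "s \<in> V"
  shows "rr f1 f2 f3 s * pp f1 f2 f3 s = 0"
proof -
  have "pp f2 f3 f1 (ro s) * qq f2 f3 f1 (ro s) = 0"
    by (rule LP_r1[OF good_rot[OF g] rot_open[OF V]]) (use H s in \<open>auto simp: rot_rel[of f2 f3 f1] ri_ro\<close>)
  then show ?thesis by (simp add: rot_rel[of f2 f3 f1] ri_ro)
qed

lemma LPQ_r1:
  assumes g: "good f1 f2 f3" and V: "open V" "s0 \<in> V"
    and H: "\<And>s. s \<in> V \<Longrightarrow> QP f1 f2 f3 s \<noteq> 0 \<and> TT f1 f2 f3 s \<noteq> 0 \<and> rr f1 f2 f3 s = 0 \<and> pp f1 f2 f3 s = 0"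
    and s: "s \<in> V"
  shows "qq f1 f2 f3 s = 0"
proof -
  have "rr f2 f3 f1 (ro s) = 0"
    by (rule LPQ[OF good_rot[OF g] rot_open[OF V]]) (use H s in \<open>auto simp: rot_rel[of f2 f3 f1] ri_ro\<close>)
  then show ?thesis by (simp add: rot_rel[of f2 f3 f1] ri_ro)
qed

lemma LPQ_r2:
  assumes g: "good f1 f2 f3" and V: "open V" "s0 \<in> V"
    and H: "\<And>s. s \<in> V \<Longrightarrow> QP f1 f2 f3 s \<noteq> 0 \<and> TT f1 f2 f3 s \<noteq> 0 \<and> qq f1 f2 f3 s = 0 \<and> rr f1 f2 f3 s = 0"
    and s: "s \<in> V"
  shows "pp f1 f2 f3 s = 0"
proof -
  have "qq f2 f3 f1 (ro s) = 0"
    by (rule LPQ_r1[OF good_rot[OF g] rot_open[OF V]]) (use H s in \<open>auto simp: rot_rel[of f2 f3 f1] ri_ro\<close>)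
  then show ?thesis by (simp add: rot_rel[of f2 f3 f1] ri_ro)
qed

lemma LFIN1b:
  assumes g: "good f1 f2 f3" and V: "open V" "s0 \<in> V"
    and H: "\<And>s. s \<in> V \<Longrightarrow> QP f1 f2 f3 s \<noteq> 0 \<and> TT f1 f2 f3 s \<noteq> 0 \<and>
       pp f1 f2 f3 s = 0 \<and> qq f1 f2 f3 s = 0 \<and> rr f1 f2 f3 s = 0"
    and s: "s \<in> V"
  shows "PP3 f1 f2 f3 s = 0"
proof -
  have "PP2 f2 f3 f1 (ro s) = 0"
    by (rule LFIN1[OF good_rot[OF g] rot_open[OF V]]) (use H s in \<open>auto simp: rot_rel[of f2 f3 f1] ri_ro\<close>)
  then show ?thesis by (simp add: rot_rel[of f2 f3 f1] ri_ro)
qed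

lemma LFIN1c:
  assumes g: "good f1 f2 f3" and V: "open V" "s0 \<in> V"
    and H: "\<And>s. s \<in> V \<Longrightarrow> QP f1 f2 f3 s \<noteq> 0 \<and> TT f1 f2 f3 s \<noteq> 0 \<and>
       pp f1 f2 f3 s = 0 \<and> qq f1 f2 f3 s = 0 \<and> rr f1 f2 f3 s = 0"
    and s: "s \<in> V"
  shows "PP1 f1 f2 f3 s = 0"
proof -
  have "PP3 f2 f3 f1 (ro s) = 0"
    by (rule LFIN1b[OF good_rot[OF g] rot_open[OF V]]) (use H s in \<open>auto simp: rot_rel[of f2 f3 f1] ri_ro\<close>)
  then show ?thesis by (simp add: rot_rel[of f2 f3 f1] ri_ro)
qed

lemma IV_all:
  assumes g: "good f1 f2 f3" and V: "open V" "s0 \<in> V"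
    and H: "\<And>s. s \<in> V \<Longrightarrow> PP1 f1 f2 f3 s = 0 \<and> PP2 f1 f2 f3 s = 0 \<and> PP3 f1 f2 f3 s = 0"
  shows "f3 u v w = f3 u 0 w" "f1 u v w = f1 u 0 w" "f2 u v w = f2 u 0 w"
proof -
  show "f3 u v w = f3 u 0 w" by (rule IV[OF g V]) (use H in blast)
  note r = rot_open[OF V]
  show "f1 u v w = f1 u 0 w"
    by (rule IV[OF good_rot[OF g] r]) (use H in \<open>auto simp: rot_rel[of f2 f3 f1]\<close>)
  show "f2 u v w = f2 u 0 w"
    by (rule IV[OF good_rot[OF good_rot[OF g]] rot_open[OF r]])
      (use H in \<open>auto simp: rot_rel[of f2 f3 f1] rot_rel[of f3 f1 f2]\<close>)
qed

lemma LFIN: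
  assumes g: "good f1 f2 f3" and V: "open V" "s0 \<in> V"
    and H: "\<And>s. s \<in> V \<Longrightarrow> QP f1 f2 f3 s \<noteq> 0 \<and> TT f1 f2 f3 s \<noteq> 0 \<and>
       pp f1 f2 f3 s = 0 \<and> qq f1 f2 f3 s = 0 \<and> rr f1 f2 f3 s = 0"
  shows False
proof -
  note c = good_cd[OF g]
  have H': "\<And>s. s \<in> V \<Longrightarrow> pp f1 f2 f3 s = 0 \<and> qq f1 f2 f3 s = 0 \<and> rr f1 f2 f3 s = 0"
    using H by blast
  note iu = IU_all[OF g V H']
  have HP: "\<And>s. s \<in> V \<Longrightarrow> PP1 f1 f2 f3 s = 0 \<and> PP2 f1 f2 f3 s = 0 \<and> PP3 f1 f2 f3 s = 0"
    using LFIN1[OF g V H] LFIN1b[OF g V H] LFIN1c[OF g V H] by blast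
  note iv = IV_all[OF g V HP]
  have k1: "f1 u v w = f1 0 0 w" for u v w using iu(2)[of u v w] iv(2)[of 0 v w] by simp
  have k2: "f2 u v w = f2 0 0 w" for u v w using iu(3)[of u v w] iv(3)[of 0 v w] by simp
  have k3: "f3 u v w = f3 0 0 w" for u v w using iu(1)[of u v w] iv(1)[of 0 v w] by simp
  have con: "f1 x1 (f3 x x1 x2) (f2 x x3 x1) = f2 x2 (f1 x x2 x3) (f3 x x1 x2)" for x x1 x2 x3
    using g unfolding good_def by blast
  have kk: "f1 0 0 (f2 0 0 t) = f2 0 0 (f3 0 0 0)" for t
  proof -
    have "f1 t (f3 0 t 0) (f2 0 0 t) = f2 0 (f1 0 0 0) (f3 0 t 0)" by (rule con)
    moreover have "f1 t (f3 0 t 0) (f2 0 0 t) = f1 0 0 (f2 0 0 t)" by (rule k1)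
    moreover have "f2 0 (f1 0 0 0) (f3 0 t 0) = f2 0 0 (f3 0 t 0)" by (rule k2)
    moreover have "f3 0 t 0 = f3 0 0 0" by (rule k3)
    ultimately show ?thesis by simp
  qed
  obtain y y1 y2 y3 where s0: "s0 = (y, y1, y2, y3)" by (cases s0) auto
  have Q: "QP f1 f2 f3 s0 \<noteq> 0" using H[OF V(2)] by blast
  have e2: "pd3 f2 y y3 y1 = pd3 f2 0 0 y1"
  proof -
    have "(\<lambda>t. f2 y y3 t) = (\<lambda>t. f2 0 0 t)" by (rule ext) (rule k2)
    then show ?thesis unfolding pd3_def by simp
  qed
  have "pd3 f2 y y3 y1 \<noteq> 0" using Q s0 by (simp add: pt_defs)
  then have d: "deriv (\<lambda>t. f2 0 0 t) y1 \<noteq> 0" using e2 by (simp add: pd3_def)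
  have kc: "f1 0 0 w = f2 0 0 (f3 0 0 0)" for w
  proof (rule key_v[of "\<lambda>w. f1 0 0 w" "\<lambda>t. f2 0 0 t" y1 UNIV])
    show "(\<lambda>w. f1 0 0 w) holomorphic_on UNIV" by (rule hol3[OF c(1)])
    show "(\<lambda>t. f2 0 0 t) holomorphic_on UNIV" by (rule hol3[OF c(2)])
    show "deriv (\<lambda>t. f2 0 0 t) y1 \<noteq> 0" by (rule d)
    show "open (UNIV :: complex set)" by simp
    show "y1 \<in> UNIV" by simp
    fix t show "f1 0 0 (f2 0 0 t) = f2 0 0 (f3 0 0 0)" by (rule kk)
  qed
  have "pd3 f1 y y2 y3 = 0"
  proof (rule pd3_const[OF c(1)])
    fix t show "f1 y y2 t = f2 0 0 (f3 0 0 0)" using k1[of y y2 t] kc[of t] by simp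
  qed
  then have "QQ1 f1 f2 f3 s0 = 0" using s0 by (simp add: QQ1_def)
  then have "QP f1 f2 f3 s0 = 0" by (simp add: QP_def)
  then show False using Q by simp
qed

lemma mainlem:
  assumes g: "good f1 f2 f3" and q: "QP f1 f2 f3 s0 \<noteq> 0"
  shows "TT f1 f2 f3 s0 = 0"
proof (rule ccontr)
  assume t: "TT f1 f2 f3 s0 \<noteq> 0"
  note pc = pt_cont[OF g]
  define N where "N = {s \<in> {s \<in> UNIV. QP f1 f2 f3 s \<noteq> 0}. TT f1 f2 f3 s \<noteq> 0}"
  have No: "open N" unfolding N_def by (intro open_nz open_UNIV pc)
  have Ns: "s0 \<in> N" using q t by (simp add: N_def)
  have HN: "QP f1 f2 f3 s \<noteq> 0 \<and> TT f1 f2 f3 s \<noteq> 0" if "s \<in> N" for s using that by (simp add: N_def)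
  have st1: "pp f1 f2 f3 s * qq f1 f2 f3 s * rr f1 f2 f3 s = 0" if "s \<in> N" for s
  proof (rule ccontr)
    assume nz: "pp f1 f2 f3 s * qq f1 f2 f3 s * rr f1 f2 f3 s \<noteq> 0"
    define G where "G = {s \<in> N. pp f1 f2 f3 s * qq f1 f2 f3 s * rr f1 f2 f3 s \<noteq> 0}"
    have Go: "open G" unfolding G_def by (intro open_nz No continuous_on_mult pc)
    show False
      by (rule SA[OF g Go, of s]) (use nz that HN in \<open>auto simp: G_def\<close>)
  qed
  show False
  proof (cases "\<exists>s1\<in>N. pp f1 f2 f3 s1 \<noteq> 0")
    case True
    then obtain s1 where s1: "s1 \<in> N" "pp f1 f2 f3 s1 \<noteq> 0" by blast
    define N1 where "N1 = {s \<in> N. pp f1 f2 f3 s \<noteq> 0}"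
    have N1o: "open N1" unfolding N1_def by (intro open_nz No pc)
    have N1s: "s1 \<in> N1" using s1 by (simp add: N1_def)
    have qr1: "qq f1 f2 f3 s * rr f1 f2 f3 s = 0" if "s \<in> N1" for s
      using st1[of s] that by (auto simp: N1_def)
    show False
    proof (cases "\<exists>s2\<in>N1. qq f1 f2 f3 s2 \<noteq> 0")
      case True
      then obtain s2 where s2: "s2 \<in> N1" "qq f1 f2 f3 s2 \<noteq> 0" by blast
      define N2 where "N2 = {s \<in> N1. qq f1 f2 f3 s \<noteq> 0}"
      have N2o: "open N2" unfolding N2_def by (intro open_nz N1o pc)
      have N2s: "s2 \<in> N2" using s2 by (simp add: N2_def)
      have "pp f1 f2 f3 s2 * qq f1 f2 f3 s2 = 0"
        by (rule LP_r1[OF g N2o N2s _ N2s]) (use qr1 HN in \<open>auto simp: N2_def N1_def\<close>)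
      then show False using s2 N2s by (auto simp: N2_def N1_def)
    next
      case False
      then have q0: "qq f1 f2 f3 s = 0" if "s \<in> N1" for s using that by blast
      have r0: "rr f1 f2 f3 s = 0" if "s \<in> N1" for s
      proof -
        have "rr f1 f2 f3 s * pp f1 f2 f3 s = 0"
          by (rule LP_r2[OF g N1o N1s _ that]) (use q0 HN in \<open>auto simp: N1_def\<close>)
        then show ?thesis using that by (auto simp: N1_def)
      qed
      have "pp f1 f2 f3 s1 = 0"
        by (rule LPQ_r2[OF g N1o N1s _ N1s]) (use q0 r0 HN in \<open>auto simp: N1_def\<close>)
      then show False using s1 by simp
    qed
  next
    case False
    then have p0: "pp f1 f2 f3 s = 0" if "s \<in> N" for s using that by blast
    have qr: "qq f1 f2 f3 s * rr f1 f2 f3 s = 0" if "s \<in> N" for s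
      by (rule LP[OF g No Ns _ that]) (use p0 HN in auto)
    show False
    proof (cases "\<exists>s1\<in>N. qq f1 f2 f3 s1 \<noteq> 0")
      case True
      then obtain s1 where s1: "s1 \<in> N" "qq f1 f2 f3 s1 \<noteq> 0" by blast
      define N1 where "N1 = {s \<in> N. qq f1 f2 f3 s \<noteq> 0}"
      have N1o: "open N1" unfolding N1_def by (intro open_nz No pc)
      have N1s: "s1 \<in> N1" using s1 by (simp add: N1_def)
      have "qq f1 f2 f3 s1 = 0"
        by (rule LPQ_r1[OF g N1o N1s _ N1s]) (use qr p0 HN in \<open>auto simp: N1_def\<close>)
      then show False using s1 by simp
    next
      case False
      then have q0: "qq f1 f2 f3 s = 0" if "s \<in> N" for s using that by blast
      have r0: "rr f1 f2 f3 s = 0" if "s \<in> N" for s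
        by (rule LPQ[OF g No Ns _ that]) (use p0 q0 HN in auto)
      show False by (rule LFIN[OF g No Ns]) (use p0 q0 r0 HN in auto)
    qed
  qed
qed

definition sw :: "fn3 \<Rightarrow> fn3" where "sw f u v w = f u w v"

lemma cdiff3_sw:
  assumes "cdiff3 f" shows "cdiff3 (sw f)"
  unfolding cdiff3_def
proof (intro allI)
  fix p q r
  obtain a b c where D: "((\<lambda>(u, v, w). f u v w) has_derivative (\<lambda>(u, v, w). a * u + b * v + c * w)) (at (p, r, q))"
    using assms unfolding cdiff3_def by blast
  have L: "((\<lambda>y::complex\<times>complex\<times>complex. (fst y, snd (snd y), fst (snd y))) has_derivative
      (\<lambda>y. (fst y, snd (snd y), fst (snd y)))) (at (p, q, r))"
    by (intro derivative_eq_intros) auto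
  have D': "((\<lambda>(u, v, w). f u v w) has_derivative (\<lambda>(u, v, w). a * u + b * v + c * w))
     (at ((\<lambda>y::complex\<times>complex\<times>complex. (fst y, snd (snd y), fst (snd y))) (p, q, r)))"
    using D by simp
  note C = has_derivative_compose[OF L D']
  have E1: "(\<lambda>y::complex\<times>complex\<times>complex. (\<lambda>(u, v, w). f u v w) (fst y, snd (snd y), fst (snd y))) = (\<lambda>(u, v, w). sw f u v w)"
    by (auto simp: fun_eq_iff sw_def)
  have E2: "(\<lambda>y::complex\<times>complex\<times>complex. (\<lambda>(u, v, w). a * u + b * v + c * w) (fst y, snd (snd y), fst (snd y))) = (\<lambda>(u, v, w). a * u + c * v + b * w)"
    by (auto simp: fun_eq_iff)
  have "((\<lambda>(u, v, w). sw f u v w) has_derivative (\<lambda>(u, v, w). a * u + c * v + b * w)) (at (p, q, r))"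
    using C unfolding E1 E2 .
  then show "\<exists>a b c. ((\<lambda>(u, v, w). sw f u v w) has_derivative (\<lambda>(u, v, w). a * u + b * v + c * w)) (at (p, q, r))"
    by blast
qed

lemma good_refl: "good f1 f2 f3 \<Longrightarrow> good (sw f1) (sw f3) (sw f2)"
  unfolding good_def using cdiff3_sw by (simp add: sw_def) metis

lemma pd_sw: "pd2 (sw f) a b c = pd3 f a c b" "pd3 (sw f) a b c = pd2 f a c b"
  unfolding pd2_def pd3_def sw_def by simp_all

theorem proposition1:
  fixes f1 f2 f3 :: "complex \<Rightarrow> complex \<Rightarrow> complex \<Rightarrow> complex"
  assumes "cdiff3 f1" and "cdiff3 f2" and "cdiff3 f3"
    and consistent: "\<And>x x1 x2 x3.
      f1 x1 (f3 x x1 x2) (f2 x x3 x1) = f2 x2 (f1 x x2 x3) (f3 x x1 x2) \<and>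
      f2 x2 (f1 x x2 x3) (f3 x x1 x2) = f3 x3 (f2 x x3 x1) (f1 x x2 x3)"
    and indep: "\<exists>z. \<forall>x x1 x2 x3. f1 x1 (f3 x x1 x2) (f2 x x3 x1) = z x1 x2 x3"
  shows "\<forall>x x1 x2 x3.
      pd3 f3 x x1 x2 * pd3 f2 x x3 x1 * pd3 f1 x x2 x3 =
      - (pd2 f3 x x1 x2 * pd2 f2 x x3 x1 * pd2 f1 x x2 x3)"
proof (intro allI)
  fix x x1 x2 x3
  obtain z where z: "\<And>x x1 x2 x3. f1 x1 (f3 x x1 x2) (f2 x x3 x1) = z x1 x2 x3" using indep by blast
  have g: "good f1 f2 f3" unfolding good_def
  proof (intro conjI allI)
    show "cdiff3 f1" "cdiff3 f2" "cdiff3 f3" by fact+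
    fix x x1 x2 x3
    show "f1 x1 (f3 x x1 x2) (f2 x x3 x1) = f2 x2 (f1 x x2 x3) (f3 x x1 x2)" using consistent by blast
    show "f2 x2 (f1 x x2 x3) (f3 x x1 x2) = f3 x3 (f2 x x3 x1) (f1 x x2 x3)" using consistent by blast
  next
    fix x x' x1 x2 x3
    show "f1 x1 (f3 x x1 x2) (f2 x x3 x1) = f1 x1 (f3 x' x1 x2) (f2 x' x3 x1)" unfolding z ..
  qed
  show "pd3 f3 x x1 x2 * pd3 f2 x x3 x1 * pd3 f1 x x2 x3 =
      - (pd2 f3 x x1 x2 * pd2 f2 x x3 x1 * pd2 f1 x x2 x3)"
  proof (cases "QP f1 f2 f3 (x, x1, x2, x3) = 0")
    case False
    have "TT f1 f2 f3 (x, x1, x2, x3) = 0" by (rule mainlem[OF g False])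
    then have "pd3 f3 x x1 x2 * pd3 f2 x x3 x1 * pd3 f1 x x2 x3 + pd2 f3 x x1 x2 * pd2 f2 x x3 x1 * pd2 f1 x x2 x3 = 0"
      by (simp add: TT_def QQ1_def QQ2_def QQ3_def PP1_def PP2_def PP3_def)
    then show ?thesis by (simp add: eq_neg_iff_add_eq_0)
  next
    case True
    then have q0: "pd3 f3 x x1 x2 * pd3 f2 x x3 x1 * pd3 f1 x x2 x3 = 0" by (simp add: pt_defs)
    show ?thesis
    proof (cases "pd2 f3 x x1 x2 * pd2 f2 x x3 x1 * pd2 f1 x x2 x3 = 0")
      case True
      then show ?thesis using q0 by (simp only: q0 True minus_zero)
    next
      case False
      have "QP (sw f1) (sw f3) (sw f2) (x, x1, x3, x2) \<noteq> 0"
        using False by (simp add: QP_def QQ1_def QQ2_def QQ3_def pd_sw ac_simps)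
      then have "TT (sw f1) (sw f3) (sw f2) (x, x1, x3, x2) = 0" by (rule mainlem[OF good_refl[OF g]])
      then have "pd3 f3 x x1 x2 * pd3 f2 x x3 x1 * pd3 f1 x x2 x3 + pd2 f3 x x1 x2 * pd2 f2 x x3 x1 * pd2 f1 x x2 x3 = 0"
        by (simp add: TT_def QQ1_def QQ2_def QQ3_def PP1_def PP2_def PP3_def pd_sw ac_simps)
      then show ?thesis by (simp add: eq_neg_iff_add_eq_0)
    qed
  qed
qed

end
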